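(* For density operators $\rho_1,\rho_2$ on a finite-dimensional Hilbert space $\mathcal H_1$ and $\sigma_1,\sigma_2$ on a finite-dimensional Hilbert space $\mathcal H_2$, $$D(\rho_1\otimes\sigma_1,\rho_2\otimes\sigma_2)^2\ \ge\ 1-\bigl(1-D_{\mathrm{wc}}(\rho_1,\rho_2)^2\bigr)\bigl(1-D(\sigma_1,\sigma_2)^2\bigr).$$ In particular $D(\rho_1,\rho_2)\ge D_{\mathrm{wc}}(\rho_1,\rho_2)$.
   Context: $D(\rho,\sigma)=\tfrac12\operatorname{tr}|\rho-\sigma|$ is the trace distance. The worst-case distinguishability is $D_{\mathrm{wc}}(\rho_1,\rho_2)=\inf\{D(|\phi_1\rangle\langle\phi_1|,|\phi_2\rangle\langle\phi_2|)\mid |\phi_i\rangle\in\operatorname{supp}\rho_i,\ \|\phi_i\|=1\}$, where $\operatorname{supp}\rho$ is the orthogonal complement of the kernel of $\rho$; equivalently it is the minimum of $\sin\vartheta_k$ over the Jordan (principal) angles $\vartheta_k$ between $\operatorname{supp}\rho_1$ and $\operatorname{supp}\rho_2$. *)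

theory Defs
  imports "HOL-Analysis.Analysis"
begin

text \<open>Finite-dimensional Hilbert spaces are modelled as \<open>complex ^ 'n\<close> for a finite
  index type \<open>'n\<close>; operators are \<open>complex ^ 'n ^ 'n\<close> matrices (row index first).\<close>

type_synonym 'n cmat = "complex ^ 'n ^ 'n"

definition adjoint_mat :: "complex ^ 'm ^ 'n \<Rightarrow> complex ^ 'n ^ 'm" where
  "adjoint_mat A = (\<chi> i j. cnj (A $ j $ i))"

definition cinner :: "complex ^ 'n \<Rightarrow> complex ^ 'n \<Rightarrow> complex" where
  "cinner x y = (\<Sum>i\<in>UNIV. cnj (x $ i) * y $ i)"

definition hermitian :: "('n::finite) cmat \<Rightarrow> bool" where
  "hermitian A \<longleftrightarrow> adjoint_mat A = A"

definition psd :: "('n::finite) cmat \<Rightarrow> bool" where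
  "psd A \<longleftrightarrow> hermitian A \<and> (\<forall>x. 0 \<le> Re (cinner x (A *v x)))"

definition density_op :: "('n::finite) cmat \<Rightarrow> bool" where
  "density_op \<rho> \<longleftrightarrow> psd \<rho> \<and> trace \<rho> = 1"

definition mat_abs :: "('n::finite) cmat \<Rightarrow> 'n cmat" where
  "mat_abs A = (THE B. psd B \<and> B ** B = adjoint_mat A ** A)"

definition trace_dist :: "('n::finite) cmat \<Rightarrow> 'n cmat \<Rightarrow> real" where
  "trace_dist \<rho> \<sigma> = Re (trace (mat_abs (\<rho> - \<sigma>))) / 2"

definition kron :: "complex ^ 'a ^ 'a \<Rightarrow> complex ^ 'b ^ 'b \<Rightarrow> complex ^ ('a \<times> 'b) ^ ('a \<times> 'b)" where
  "kron A B = (\<chi> p q. A $ fst p $ fst q * B $ snd p $ snd q)"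

definition ket_bra :: "complex ^ 'n \<Rightarrow> complex ^ 'n ^ 'n" where
  "ket_bra \<phi> = (\<chi> i j. \<phi> $ i * cnj (\<phi> $ j))"

definition ker_op :: "('n::finite) cmat \<Rightarrow> (complex ^ 'n) set" where
  "ker_op A = {y. A *v y = 0}"

definition supp_op :: "('n::finite) cmat \<Rightarrow> (complex ^ 'n) set" where
  "supp_op A = {x. \<forall>y\<in>ker_op A. cinner y x = 0}"

definition wc_dist :: "('n::finite) cmat \<Rightarrow> 'n cmat \<Rightarrow> real" where
  "wc_dist \<rho>1 \<rho>2 = Inf {trace_dist (ket_bra \<phi>1) (ket_bra \<phi>2) | \<phi>1 \<phi>2.
      \<phi>1 \<in> supp_op \<rho>1 \<and> \<phi>2 \<in> supp_op \<rho>2 \<and> norm \<phi>1 = 1 \<and> norm \<phi>2 = 1}"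

end

theory Submission
  imports Defs
begin

lemma cinner_zero_left[simp]: "cinner 0 y = 0" by (simp add: cinner_def)
lemma cinner_zero_right[simp]: "cinner x 0 = 0" by (simp add: cinner_def)

lemma cinner_add_right: "cinner x (y + z) = cinner x y + cinner x z"
  by (simp add: cinner_def distrib_left sum.distrib)
lemma cinner_add_left: "cinner (x + y) z = cinner x z + cinner y z"
  by (simp add: cinner_def distrib_right sum.distrib)
lemma cinner_diff_right: "cinner x (y - z) = cinner x y - cinner x z"
  by (simp add: cinner_def right_diff_distrib sum_subtractf)
lemma cinner_diff_left: "cinner (x - y) z = cinner x z - cinner y z"
  by (simp add: cinner_def left_diff_distrib sum_subtractf)
lemma cinner_scale_right: "cinner x (c *s y) = c * cinner x y"
  by (simp add: cinner_def sum_distrib_left mult_ac)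
lemma cinner_scale_left: "cinner (c *s x) y = cnj c * cinner x y"
  by (simp add: cinner_def sum_distrib_left mult_ac)
lemma cinner_sum_right: "cinner x (sum f S) = (\<Sum>s\<in>S. cinner x (f s))"
  by (induct S rule: infinite_finite_induct) (auto simp: cinner_add_right)
lemma cinner_sum_left: "cinner (sum f S) y = (\<Sum>s\<in>S. cinner (f s) y)"
  by (induct S rule: infinite_finite_induct) (auto simp: cinner_add_left)
lemma cinner_cnj: "cnj (cinner x y) = cinner y x"
  by (simp add: cinner_def mult.commute)
lemma cinner_minus_right: "cinner x (- y) = - cinner x y" by (simp add: cinner_def sum_negf)

lemma cinner_self: "cinner x x = of_real ((norm x)^2)"
proof -
  have "(norm x)^2 = (\<Sum>i\<in>UNIV. (cmod (x$i))^2)"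
    by (simp add: norm_vec_def L2_set_def sum_nonneg)
  hence "of_real ((norm x)^2) = (\<Sum>i\<in>UNIV. of_real ((cmod (x$i))^2) :: complex)" by simp
  also have "\<dots> = cinner x x"
    unfolding cinner_def by (rule sum.cong) (auto simp: mult.commute complex_norm_square[symmetric])
  finally show ?thesis by simp
qed

lemma cinner_self_eq_0: "cinner x x = 0 \<longleftrightarrow> x = 0"
  by (simp add: cinner_self)

lemma Re_cinner_self_ge0: "0 \<le> Re (cinner x x)"
  by (simp add: cinner_self)

lemma cinner_adj: "cinner x (A *v y) = cinner (adjoint_mat A *v x) y"
proof -
  have "cinner x (A *v y) = (\<Sum>i\<in>UNIV. \<Sum>j\<in>UNIV. cnj (x$i) * A$i$j * y$j)"
    unfolding cinner_def matrix_vector_mult_def by (simp add: sum_distrib_left mult.assoc)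
  also have "\<dots> = (\<Sum>j\<in>UNIV. \<Sum>i\<in>UNIV. cnj (x$i) * A$i$j * y$j)"
    by (rule sum.swap)
  also have "\<dots> = cinner (adjoint_mat A *v x) y"
    unfolding cinner_def matrix_vector_mult_def adjoint_mat_def
    by (simp add: sum_distrib_right sum_distrib_left mult.commute mult.left_commute)
  finally show ?thesis .
qed

lemma herm_cinner: "hermitian A \<Longrightarrow> cinner x (A *v y) = cinner (A *v x) y"
  by (simp add: hermitian_def cinner_adj)

lemma herm_real: "hermitian A \<Longrightarrow> cinner x (A *v x) = of_real (Re (cinner x (A *v x)))"
proof -
  assume h: "hermitian A"
  have "cnj (cinner x (A *v x)) = cinner x (A *v x)"
    using h by (simp add: cinner_cnj herm_cinner)
  hence "Im (cinner x (A *v x)) = 0" by (metis cnj.sel(2) equal_neg_zero)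
  thus ?thesis by (simp add: complex_eq_iff)
qed

lemma mv_scale: "A *v (c *s x) = c *s (A *v (x::complex^'n))"
  by (simp add: vector_scalar_commute)
lemma mv_sum: "A *v sum f S = (\<Sum>s\<in>S. A *v f s)"
  by (induct S rule: infinite_finite_induct) (auto simp: matrix_vector_right_distrib)


definition csub :: "(complex^'n) set \<Rightarrow> bool" where
  "csub V \<longleftrightarrow> 0 \<in> V \<and> (\<forall>x\<in>V. \<forall>y\<in>V. x + y \<in> V) \<and> (\<forall>c. \<forall>x\<in>V. c *s x \<in> V)"

definition orthonormal :: "(complex^'n) set \<Rightarrow> bool" where
  "orthonormal W \<longleftrightarrow> (\<forall>u\<in>W. \<forall>v\<in>W. cinner u v = (if u = v then 1 else 0))"

definition onb_of :: "(complex^'n) set \<Rightarrow> (complex^'n) set \<Rightarrow> bool" where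
  "onb_of W V \<longleftrightarrow> finite W \<and> W \<subseteq> V \<and> orthonormal W \<and> (\<forall>z\<in>V. z = (\<Sum>w\<in>W. cinner w z *s w))"

lemma cscale_real: "(of_real r :: complex) *s x = r *\<^sub>R x"
proof (subst vec_eq_iff, intro allI)
  fix i
  have "(r *\<^sub>R x)$i = r *\<^sub>R (x$i)" by (simp only: vector_scaleR_component)
  moreover have "r *\<^sub>R (x$i) = (of_real r :: complex) * x$i" by (simp add: scaleR_conv_of_real)
  ultimately show "((of_real r :: complex) *s x)$i = (r *\<^sub>R x)$i" by (simp only: vector_smult_component)
qed

lemma csub_diff: "csub V \<Longrightarrow> x \<in> V \<Longrightarrow> y \<in> V \<Longrightarrow> x - y \<in> V"
  unfolding csub_def by (metis diff_conv_add_uminus vector_sneg_minus1)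

lemma csub_sum: "csub V \<Longrightarrow> (\<And>i. i \<in> S \<Longrightarrow> f i \<in> V) \<Longrightarrow> sum f S \<in> V"
  by (induct S rule: infinite_finite_induct) (auto simp: csub_def)

lemma csub_subspace: "csub V \<Longrightarrow> subspace V"
  unfolding subspace_def csub_def by (metis cscale_real)

lemma cont_quad: "continuous_on S (\<lambda>x::complex^'n. Re (cinner x (H *v x)))"
  unfolding cinner_def matrix_vector_mult_def
  by (intro continuous_intros)

lemma quad_zero:
  fixes R K :: real
  assumes "\<forall>t. 2 * t * R \<le> t^2 * K"
  shows "R = 0"
proof (rule ccontr)
  assume "R \<noteq> 0"
  define a where "a = \<bar>K\<bar> + 1"
  have pos: "a > 0" "K \<le> a - 1" "0 \<le> a - 1" by (auto simp: a_def)
  define t where "t = R / a"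
  have "2 * t * R \<le> t^2 * K" using assms by blast
  moreover have "t^2 * K \<le> t^2 * (a - 1)" using pos by (simp add: mult_left_mono)
  moreover have "t^2 * (a - 1) < 2 * t * R"
  proof -
    have e1: "t^2 * (a - 1) = R^2 * (a - 1) / a^2" by (simp add: t_def power_divide)
    have e2: "2 * t * R = R^2 * a * 2 / a^2" using pos by (simp add: t_def power2_eq_square)
    have "R^2 > 0" using \<open>R \<noteq> 0\<close> by simp
    moreover have "a - 1 < a * 2" using pos by simp
    ultimately have "R^2 * (a - 1) < R^2 * (a * 2)" by (intro mult_strict_left_mono) auto
    hence "R^2 * (a - 1) < R^2 * a * 2" by (simp add: mult.assoc)
    hence "R^2 * (a - 1) / a^2 < R^2 * a * 2 / a^2" using pos by (simp add: divide_strict_right_mono)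
    thus ?thesis using e1 e2 by simp
  qed
  ultimately show False by linarith
qed

lemma quad_scale: "cinner (r *\<^sub>R x) (H *v (r *\<^sub>R x)) = (of_real (r^2)) * cinner x (H *v x)"
  by (simp add: cscale_real[symmetric] mv_scale cinner_scale_left cinner_scale_right power2_eq_square)

lemma norm_sq_cinner: "(norm x)^2 = Re (cinner x x)"
  by (simp add: cinner_self)


lemma cinner_real_scale_right: "cinner x (r *\<^sub>R y) = of_real r * cinner x y"
  by (simp add: cscale_real[symmetric] cinner_scale_right)
lemma cinner_real_scale_left: "cinner (r *\<^sub>R x) y = of_real r * cinner x y"
  by (simp add: cscale_real[symmetric] cinner_scale_left)
lemma mv_real_scale: "A *v (r *\<^sub>R x) = r *\<^sub>R (A *v (x::complex^'n))"
  by (simp add: cscale_real[symmetric] mv_scale)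

lemma spectral_compressed:
  fixes H :: "complex^'n^'n"
  assumes herm: "hermitian H" and "csub V"
  shows "\<exists>W. onb_of W V \<and> (\<forall>w\<in>W. \<forall>w'\<in>W. w \<noteq> w' \<longrightarrow> cinner w (H *v w') = 0)"
  using assms(2)
proof (induct "dim V" arbitrary: V rule: less_induct)
  case less
  show ?case
  proof (cases "V \<subseteq> {0}")
    case True
    have "onb_of {} V" using True by (auto simp: onb_of_def orthonormal_def)
    thus ?thesis by blast
  next
    case False
    then obtain x where x: "x \<in> V" "x \<noteq> 0" by auto
    define f where "f = (\<lambda>x::complex^'n. Re (cinner x (H *v x)))"
    define S where "S = V \<inter> sphere 0 1"
    have sub: "subspace V" using less.prems csub_subspace by blast
    have "compact S" unfolding S_def using closed_subspace[OF sub] compact_sphere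
      by (metis compact_Int_closed inf_commute)
    have "(1 / norm x) *\<^sub>R x \<in> S" using x sub by (simp add: S_def subspace_scale)
    hence "S \<noteq> {}" by auto
    have "continuous_on S f" unfolding f_def by (rule cont_quad)
    then obtain v where v: "v \<in> S" "\<forall>y\<in>S. f y \<le> f v"
      using continuous_attains_sup[OF \<open>compact S\<close> \<open>S \<noteq> {}\<close>] by blast
    have vV: "v \<in> V" and vn: "norm v = 1" using v S_def by auto
    have vv: "cinner v v = 1" using vn by (simp add: cinner_self)
    define lam where "lam = f v"
    have hom: "f z \<le> lam * (norm z)^2" if "z \<in> V" for z
    proof (cases "z = 0")
      case True thus ?thesis by (simp add: f_def)
    next
      case False
      let ?y = "(1/norm z) *\<^sub>R z"
      have "?y \<in> S" using that False sub by (simp add: S_def subspace_scale)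
      hence "f ?y \<le> lam" using v lam_def by auto
      moreover have "f ?y = f z / (norm z)^2"
        by (simp add: f_def quad_scale power_divide)
      ultimately show ?thesis using False by (simp add: field_simps)
    qed
    have orth: "cinner w (H *v v) = 0" if "w \<in> V" "cinner v w = 0" for w
    proof -
      have key: "Re (cinner u (H *v v)) = 0" if uV: "u \<in> V" and vu: "cinner v u = 0" for u
      proof -
        let ?R = "Re (cinner u (H *v v))"
        have "2 * t * ?R \<le> t^2 * (lam * (norm u)^2 - f u)" for t
        proof -
          have zV: "v + t *\<^sub>R u \<in> V" using uV vV sub by (simp add: subspace_add subspace_scale)
          have uv: "cinner u v = 0" using vu cinner_cnj by (metis complex_cnj_zero)
          have e1: "(norm (v + t *\<^sub>R u))^2 = 1 + t^2 * (norm u)^2"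
            unfolding norm_sq_cinner
            by (simp add: cinner_add_left cinner_add_right cinner_real_scale_left
                cinner_real_scale_right vv uv vu power2_eq_square)
          have hv: "cinner v (H *v u) = cnj (cinner u (H *v v))"
            using herm by (simp add: herm_cinner cinner_cnj)
          have e2: "f (v + t *\<^sub>R u) = lam + 2 * t * ?R + t^2 * f u"
            unfolding f_def lam_def
            by (simp add: cinner_add_left cinner_add_right cinner_real_scale_left
                cinner_real_scale_right matrix_vector_right_distrib mv_real_scale hv
                power2_eq_square algebra_simps)
          from hom[OF zV] e1 e2 show ?thesis by (simp add: algebra_simps)
        qed
        thus ?thesis using quad_zero by blast
      qed
      have "Re (cinner w (H *v v)) = 0" using key that by blast
      moreover have "Re (cinner (\<i> *s w) (H *v v)) = 0"
      proof (rule key)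
        show "\<i> *s w \<in> V" using less.prems that(1) by (simp add: csub_def)
        show "cinner v (\<i> *s w) = 0" using that(2) by (simp add: cinner_scale_right)
      qed
      hence "Im (cinner w (H *v v)) = 0" by (simp add: cinner_scale_left)
      ultimately show ?thesis by (simp add: complex_eq_iff)
    qed
    define V' where "V' = {z \<in> V. cinner v z = 0}"
    have cV': "csub V'" using less.prems
      unfolding V'_def csub_def by (auto simp: cinner_add_right cinner_scale_right)
    have "V' \<subseteq> V" and "v \<notin> V'" using vv by (auto simp: V'_def)
    hence "V' \<subset> V" using vV by auto
    hence "dim V' < dim V" using dim_psubset span_eq_iff csub_subspace cV' sub by metis
    then obtain W' where W': "onb_of W' V'" "\<forall>w\<in>W'. \<forall>w'\<in>W'. w \<noteq> w' \<longrightarrow> cinner w (H *v w') = 0"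
      using less.hyps cV' by blast
    have W'V': "W' \<subseteq> V'" and finW': "finite W'" and onW': "orthonormal W'"
      and spW': "\<forall>z\<in>V'. z = (\<Sum>w\<in>W'. cinner w z *s w)"
      using W'(1) by (auto simp: onb_of_def)
    have vW': "v \<notin> W'" using \<open>v \<notin> V'\<close> W'V' by auto
    have vw: "cinner v w = 0" if "w \<in> W'" for w using that W'V' by (auto simp: V'_def)
    have wv: "cinner w v = 0" if "w \<in> W'" for w using vw[OF that] cinner_cnj by (metis complex_cnj_zero)
    define W where "W = insert v W'"
    have "onb_of W V"
      unfolding onb_of_def
    proof (intro conjI ballI)
      show "finite W" using finW' by (simp add: W_def)
      show "W \<subseteq> V" using W'V' \<open>V' \<subseteq> V\<close> vV by (auto simp: W_def)
      show "orthonormal W" using onW' vv vw wv vW' unfolding orthonormal_def W_def by auto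
      fix z assume zV: "z \<in> V"
      define z' where "z' = z - cinner v z *s v"
      have "z' \<in> V'" unfolding V'_def z'_def
        using zV vV less.prems by (auto simp: csub_diff csub_def cinner_diff_right cinner_scale_right vv)
      hence "z' = (\<Sum>w\<in>W'. cinner w z' *s w)" using spW' by blast
      also have "\<dots> = (\<Sum>w\<in>W'. cinner w z *s w)"
        by (rule sum.cong) (auto simp: z'_def cinner_diff_right cinner_scale_right wv)
      finally have "z - cinner v z *s v = (\<Sum>w\<in>W'. cinner w z *s w)" by (simp add: z'_def)
      hence "z = cinner v z *s v + (\<Sum>w\<in>W'. cinner w z *s w)" by (metis add.commute diff_add_cancel)
      thus "z = (\<Sum>w\<in>W. cinner w z *s w)" using finW' vW' by (simp add: W_def)
    qed
    moreover have "\<forall>w\<in>W. \<forall>w'\<in>W. w \<noteq> w' \<longrightarrow> cinner w (H *v w') = 0"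
    proof (intro ballI impI)
      fix w w' assume "w \<in> W" "w' \<in> W" "w \<noteq> w'"
      show "cinner w (H *v w') = 0"
      proof (cases "w = v")
        case True
        hence "w' \<in> W'" using \<open>w' \<in> W\<close> \<open>w \<noteq> w'\<close> by (auto simp: W_def)
        hence "cinner w' (H *v v) = 0" using orth W'V' by (auto simp: V'_def)
        hence "cinner (H *v v) w' = 0" using cinner_cnj by (metis complex_cnj_zero)
        thus ?thesis using True herm by (simp add: herm_cinner)
      next
        case False
        hence wW': "w \<in> W'" using \<open>w \<in> W\<close> by (auto simp: W_def)
        show ?thesis
        proof (cases "w' = v")
          case True thus ?thesis using orth wW' W'V' by (auto simp: V'_def)
        next
          case False thus ?thesis using W'(2) wW' \<open>w' \<in> W\<close> \<open>w \<noteq> w'\<close> by (auto simp: W_def)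
        qed
      qed
    qed
    ultimately show ?thesis by blast
  qed
qed


lemma csub_UNIV: "csub UNIV" by (simp add: csub_def)

lemma cinner_cnj0: "cinner x y = 0 \<Longrightarrow> cinner y x = 0"
  by (metis cinner_cnj complex_cnj_zero)

lemma onb_orth: "onb_of U V \<Longrightarrow> u \<in> U \<Longrightarrow> w \<in> U \<Longrightarrow> cinner u w = (if u = w then 1 else 0)"
  by (simp add: onb_of_def orthonormal_def)

lemma sum_delta_fun:
  assumes "finite U" "u \<in> U"
  shows "(\<Sum>w\<in>U. g w * (if u = w then 1 else 0)) = (g u :: complex)"
  using assms by (simp add: if_distrib sum.delta cong: if_cong)

lemma sum_delta_fun':
  assumes "finite U" "u \<in> U"
  shows "(\<Sum>w\<in>U. g w * (if w = u then 1 else 0)) = (g u :: complex)"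
  using assms by (simp add: if_distrib sum.delta' cong: if_cong)

lemma spectral_full:
  fixes H :: "complex^'n^'n"
  assumes "hermitian H"
  shows "\<exists>U. onb_of U UNIV \<and> (\<forall>u\<in>U. H *v u = cinner u (H *v u) *s u)"
proof -
  obtain U where U: "onb_of U UNIV" "\<forall>w\<in>U. \<forall>w'\<in>U. w \<noteq> w' \<longrightarrow> cinner w (H *v w') = 0"
    using spectral_compressed[OF assms csub_UNIV] by blast
  have "H *v u = cinner u (H *v u) *s u" if "u \<in> U" for u
  proof -
    have fin: "finite U" using U by (simp add: onb_of_def)
    have "H *v u = (\<Sum>w\<in>U. cinner w (H *v u) *s w)" using U by (simp add: onb_of_def)
    also have "\<dots> = (\<Sum>w\<in>U. (if w = u then cinner u (H *v u) *s u else 0))"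
      by (rule sum.cong) (use U that in auto)
    also have "\<dots> = cinner u (H *v u) *s u" using fin that by (simp add: sum.delta')
    finally show ?thesis .
  qed
  thus ?thesis using U by blast
qed

lemma parseval:
  assumes "onb_of U UNIV"
  shows "(\<Sum>u\<in>U. cinner x u * cinner u y) = cinner x y"
proof -
  have "y = (\<Sum>u\<in>U. cinner u y *s u)" using assms by (simp add: onb_of_def)
  hence "cinner x y = cinner x (\<Sum>u\<in>U. cinner u y *s u)" by simp
  also have "\<dots> = (\<Sum>u\<in>U. cinner x u * cinner u y)"
    by (simp add: cinner_sum_right cinner_scale_right mult.commute)
  finally show ?thesis by simp
qed

lemma cinner_axis_left: "cinner (axis i 1) z = z $ i"
proof -
  have "cinner (axis i 1) z = (\<Sum>j\<in>UNIV. if j = i then z$j else 0)"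
    unfolding cinner_def by (rule sum.cong) (auto simp: axis_def)
  thus ?thesis by simp
qed
lemma cinner_axis_right: "cinner z (axis i 1) = cnj (z $ i)"
proof -
  have "cinner z (axis i 1) = (\<Sum>j\<in>UNIV. if j = i then cnj (z$j) else 0)"
    unfolding cinner_def by (rule sum.cong) (auto simp: axis_def)
  thus ?thesis by simp
qed

lemma trace_onb:
  assumes "onb_of U UNIV"
  shows "trace A = (\<Sum>u\<in>U. cinner u (A *v u))"
proof -
  have "(\<Sum>u\<in>U. cinner u (A *v u)) = (\<Sum>u\<in>U. \<Sum>i\<in>UNIV. cinner (adjoint_mat A *v axis i 1) u * cinner u (axis i 1))"
  proof (rule sum.cong)
    fix u
    show "cinner u (A *v u) = (\<Sum>i\<in>UNIV. cinner (adjoint_mat A *v axis i 1) u * cinner u (axis i 1))"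
      unfolding cinner_axis_right cinner_adj[symmetric] cinner_axis_left
      by (simp add: cinner_def mult.commute)
  qed simp
  also have "\<dots> = (\<Sum>i\<in>UNIV. \<Sum>u\<in>U. cinner (adjoint_mat A *v axis i 1) u * cinner u (axis i 1))"
    by (rule sum.swap)
  also have "\<dots> = (\<Sum>i\<in>UNIV. cinner (adjoint_mat A *v axis i 1) (axis i 1))"
    using parseval[OF assms] by simp
  also have "\<dots> = trace A"
    unfolding cinner_adj[symmetric] cinner_axis_right trace_def
    by (simp add: matrix_vector_mult_def axis_def if_distrib sum.delta' adjoint_mat_def cong: if_cong)
  finally show ?thesis by simp
qed

definition ortho_fam :: "'i set \<Rightarrow> ('i \<Rightarrow> complex^'n) \<Rightarrow> bool" where
  "ortho_fam I f \<longleftrightarrow> (\<forall>i\<in>I. \<forall>j\<in>I. cinner (f i) (f j) = (if i = j then 1 else 0))"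

lemma cnj_mult_self: "cnj c * c = of_real ((cmod c)^2)"
  by (metis complex_norm_square mult.commute)

lemma mult_cnj_self2: "c * cnj c = (of_real (cmod c))^2"
  by (metis complex_norm_square of_real_power)

lemma cnj_mult_self2: "cnj c * c = (of_real (cmod c))^2"
  by (metis complex_norm_square of_real_power mult.commute)

lemma bessel:
  assumes fin: "finite I" and orth: "ortho_fam I f"
  shows "(\<Sum>i\<in>I. (cmod (cinner (f i) z))^2) \<le> Re (cinner z z)"
proof -
  define p where "p = (\<Sum>i\<in>I. cinner (f i) z *s f i)"
  define S where "S = (\<Sum>i\<in>I. of_real ((cmod (cinner (f i) z))^2) :: complex)"
  have pf: "cinner p (f j) = cnj (cinner (f j) z)" if j: "j \<in> I" for j
  proof -
    have "cinner p (f j) = (\<Sum>i\<in>I. cnj (cinner (f i) z) * cinner (f i) (f j))"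
      unfolding p_def by (simp add: cinner_sum_left cinner_scale_left)
    also have "\<dots> = (\<Sum>i\<in>I. cnj (cinner (f i) z) * (if i = j then 1 else 0))"
      using orth j by (auto simp: ortho_fam_def intro!: sum.cong)
    also have "\<dots> = cnj (cinner (f j) z)" using sum_delta_fun'[OF fin j] .
    finally show ?thesis .
  qed
  have pp: "cinner p p = S"
  proof -
    have "cinner p p = (\<Sum>j\<in>I. cinner (f j) z * cinner p (f j))"
      using cinner_sum_right[of p "\<lambda>i. cinner (f i) z *s f i" I]
      by (simp add: p_def[symmetric] cinner_scale_right)
    also have "\<dots> = (\<Sum>j\<in>I. cnj (cinner (f j) z) * cinner (f j) z)"
      by (rule sum.cong) (auto simp: pf mult.commute)
    finally show ?thesis by (simp add: S_def cnj_mult_self)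
  qed
  have zf: "cinner z (f i) = cnj (cinner (f i) z)" for i by (simp add: cinner_cnj)
  have zp: "cinner z p = S" unfolding p_def S_def
    by (simp add: cinner_sum_right cinner_scale_right zf mult_cnj_self2)
  have pz: "cinner p z = S" unfolding p_def S_def
    by (simp add: cinner_sum_left cinner_scale_left cnj_mult_self2)
  have "0 \<le> Re (cinner (z - p) (z - p))" by (rule Re_cinner_self_ge0)
  also have "\<dots> = Re (cinner z z) - Re S"
    by (simp add: cinner_diff_left cinner_diff_right pp zp pz)
  finally show ?thesis by (simp add: S_def)
qed

lemma psd_herm: "psd A \<Longrightarrow> hermitian A" by (simp add: psd_def)
lemma psd_nonneg: "psd A \<Longrightarrow> 0 \<le> Re (cinner x (A *v x))" by (simp add: psd_def)

definition spec_mat :: "(complex^'n) set \<Rightarrow> (complex^'n \<Rightarrow> real) \<Rightarrow> complex^'n^'n" where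
  "spec_mat U g = (\<chi> i j. \<Sum>u\<in>U. of_real (g u) * u$i * cnj (u$j))"

lemma spec_mat_apply: "spec_mat U g *v z = (\<Sum>u\<in>U. (of_real (g u) * cinner u z) *s u)"
  unfolding spec_mat_def matrix_vector_mult_def cinner_def
  apply (simp add: vec_eq_iff sum_component sum_distrib_left sum_distrib_right mult_ac)
  apply (subst sum.swap)
  apply (simp add: mult_ac)
  done

lemma spec_mat_herm: "hermitian (spec_mat U g)"
  unfolding hermitian_def adjoint_mat_def spec_mat_def
  by (simp add: vec_eq_iff mult_ac)

lemma spec_mat_quad:
  assumes "onb_of U UNIV" "u \<in> U"
  shows "cinner u (spec_mat U g *v u) = of_real (g u)"
proof -
  have fin: "finite U" using assms by (simp add: onb_of_def)
  have "cinner u (spec_mat U g *v u) = (\<Sum>w\<in>U. of_real (g w) * cinner w u * cinner u w)"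
    by (simp add: spec_mat_apply cinner_sum_right cinner_scale_right)
  also have "\<dots> = (\<Sum>w\<in>U. of_real (g w) * (if w = u then 1 else 0))"
    by (rule sum.cong) (use assms in \<open>auto simp: onb_orth\<close>)
  also have "\<dots> = of_real (g u)" using sum_delta_fun'[OF fin assms(2)] .
  finally show ?thesis .
qed

lemma spec_mat_inner:
  assumes "onb_of U UNIV" "u \<in> U"
  shows "cinner u (spec_mat U g *v z) = of_real (g u) * cinner u z"
proof -
  have fin: "finite U" using assms by (simp add: onb_of_def)
  have "cinner u (spec_mat U g *v z) = (\<Sum>w\<in>U. (of_real (g w) * cinner w z) * cinner u w)"
    by (simp add: spec_mat_apply cinner_sum_right cinner_scale_right mult.commute)
  also have "\<dots> = (\<Sum>w\<in>U. (of_real (g w) * cinner w z) * (if u = w then 1 else 0))"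
    by (rule sum.cong) (use assms in \<open>auto simp: onb_orth\<close>)
  also have "\<dots> = of_real (g u) * cinner u z" using sum_delta_fun[OF fin assms(2)] .
  finally show ?thesis .
qed

lemma spec_mat_mult:
  assumes "onb_of U UNIV"
  shows "spec_mat U g ** spec_mat U h = spec_mat U (\<lambda>u. g u * h u)"
proof (subst matrix_eq, intro allI)
  fix z
  have "(spec_mat U g ** spec_mat U h) *v z = spec_mat U g *v (spec_mat U h *v z)"
    by (simp add: matrix_vector_mul_assoc)
  also have "\<dots> = (\<Sum>u\<in>U. (of_real (g u) * (of_real (h u) * cinner u z)) *s u)"
    unfolding spec_mat_apply[of U g]
    by (rule sum.cong) (use assms in \<open>auto simp: spec_mat_inner\<close>)
  also have "\<dots> = spec_mat U (\<lambda>u. g u * h u) *v z"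
    by (simp add: spec_mat_apply mult.assoc)
  finally show "(spec_mat U g ** spec_mat U h) *v z = spec_mat U (\<lambda>u. g u * h u) *v z" .
qed

lemma spec_mat_trace:
  assumes "onb_of U UNIV"
  shows "trace (spec_mat U g) = of_real (\<Sum>u\<in>U. g u)"
  using assms by (simp add: trace_onb[OF assms] spec_mat_quad)

lemma eig_real:
  assumes "hermitian H"
  shows "cinner u (H *v u) = of_real (Re (cinner u (H *v u)))"
  using herm_real[OF assms] .

lemma spec_decomp:
  assumes "onb_of U UNIV" "\<forall>u\<in>U. H *v u = cinner u (H *v u) *s u" "hermitian H"
  shows "H = spec_mat U (\<lambda>u. Re (cinner u (H *v u)))"
proof (subst matrix_eq, intro allI)
  fix z
  have eig: "H *v u = cinner u (H *v u) *s u" if "u \<in> U" for u using assms(2) that by blast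
  have "z = (\<Sum>u\<in>U. cinner u z *s u)" using assms by (simp add: onb_of_def)
  hence "H *v z = H *v (\<Sum>u\<in>U. cinner u z *s u)" by simp
  also have "\<dots> = (\<Sum>u\<in>U. cinner u z *s (cinner u (H *v u) *s u))"
    unfolding mv_sum mv_scale
  proof (rule sum.cong)
    fix u assume "u \<in> U"
    from eig[OF this] show "cinner u z *s (H *v u) = cinner u z *s (cinner u (H *v u) *s u)"
      by (rule arg_cong)
  qed simp
  also have "\<dots> = spec_mat U (\<lambda>u. Re (cinner u (H *v u))) *v z"
    unfolding spec_mat_apply
    by (rule sum.cong) (auto simp: vector_smult_assoc eig_real[OF assms(3), symmetric] mult.commute)
  finally show "H *v z = spec_mat U (\<lambda>u. Re (cinner u (H *v u))) *v z" .
qed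


lemma psd_sqrt_unique:
  assumes B: "psd B" and C: "psd C" and eq: "B ** B = C ** C"
  shows "B = C"
proof -
  obtain U where U: "onb_of U UNIV" "\<forall>u\<in>U. B *v u = cinner u (B *v u) *s u"
    using spectral_full[OF psd_herm[OF B]] by blast
  have CB: "C *v u = B *v u" if u: "u \<in> U" for u
  proof -
    define b where "b = Re (cinner u (B *v u))"
    have b0: "0 \<le> b" using B by (simp add: b_def psd_nonneg)
    have Bu: "B *v u = of_real b *s u" using U u eig_real[OF psd_herm[OF B]] b_def by metis
    have "C *v (C *v u) = (C ** C) *v u" by (simp add: matrix_vector_mul_assoc)
    also have "\<dots> = B *v (B *v u)" using eq by (simp add: matrix_vector_mul_assoc)
    also have "\<dots> = of_real (b * b) *s u" by (simp add: Bu mv_scale vector_smult_assoc)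
    finally have CCu: "C *v (C *v u) = of_real (b * b) *s u" .
    define y where "y = C *v u - of_real b *s u"
    have Cy: "C *v y = - (of_real b *s y)"
      unfolding y_def
      by (simp add: matrix_vector_mult_diff_distrib mv_scale CCu vec_eq_iff algebra_simps)
    have "0 \<le> Re (cinner y (C *v y))" using C by (rule psd_nonneg)
    also have "Re (cinner y (C *v y)) = - b * Re (cinner y y)"
      by (simp add: Cy cinner_minus_right cinner_scale_right)
    finally have "b * Re (cinner y y) \<le> 0" by simp
    moreover have "0 \<le> Re (cinner y y)" by (rule Re_cinner_self_ge0)
    ultimately have "b = 0 \<or> Re (cinner y y) = 0" using b0
      by (metis antisym mult_nonneg_nonneg mult_eq_0_iff)
    thus ?thesis
    proof
      assume "Re (cinner y y) = 0"
      hence "y = 0" by (simp add: cinner_self)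
      thus ?thesis by (simp add: y_def Bu)
    next
      assume b: "b = 0"
      have "cinner (C *v u) (C *v u) = cinner u (C *v (C *v u))"
        using psd_herm[OF C] by (simp add: herm_cinner)
      also have "\<dots> = 0" by (simp add: CCu b)
      finally have "C *v u = 0" by (simp add: cinner_self_eq_0)
      thus ?thesis by (simp add: Bu b)
    qed
  qed
  show ?thesis
  proof (subst matrix_eq, intro allI)
    fix z
    have "z = (\<Sum>u\<in>U. cinner u z *s u)" using U by (simp add: onb_of_def)
    hence "B *v z = B *v (\<Sum>u\<in>U. cinner u z *s u)" and "C *v z = C *v (\<Sum>u\<in>U. cinner u z *s u)"
      by simp_all
    moreover have "B *v (\<Sum>u\<in>U. cinner u z *s u) = C *v (\<Sum>u\<in>U. cinner u z *s u)"
      unfolding mv_sum mv_scale by (rule sum.cong) (auto simp: CB)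
    ultimately show "B *v z = C *v z" by simp
  qed
qed

lemma spec_mat_quad_gen:
  "cinner z (spec_mat U g *v z) = (\<Sum>u\<in>U. of_real (g u * (cmod (cinner u z))^2))"
  unfolding spec_mat_apply cinner_sum_right cinner_scale_right
proof (rule sum.cong)
  fix u
  have "cinner z u = cnj (cinner u z)" by (simp add: cinner_cnj)
  thus "of_real (g u) * cinner u z * cinner z u = of_real (g u * (cmod (cinner u z))^2)"
    by (simp add: mult_cnj_self2 mult.assoc)
qed simp

lemma spec_mat_psd: "(\<And>u. u \<in> U \<Longrightarrow> 0 \<le> g u) \<Longrightarrow> psd (spec_mat U g)"
  unfolding psd_def
  by (simp add: spec_mat_herm spec_mat_quad_gen Re_sum sum_nonneg)

lemma mat_abs_spec:
  assumes herm: "hermitian X" and U: "onb_of U UNIV" and eig: "\<forall>u\<in>U. X *v u = cinner u (X *v u) *s u"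
  shows "mat_abs X = spec_mat U (\<lambda>u. \<bar>Re (cinner u (X *v u))\<bar>)"
proof -
  define l where "l = (\<lambda>u. Re (cinner u (X *v u)))"
  define B where "B = spec_mat U (\<lambda>u. \<bar>l u\<bar>)"
  have X: "X = spec_mat U l" unfolding l_def by (rule spec_decomp[OF U eig herm])
  have XX: "adjoint_mat X ** X = spec_mat U (\<lambda>u. l u * l u)"
  proof -
    have "adjoint_mat X ** X = X ** X" using herm by (simp add: hermitian_def)
    also have "\<dots> = spec_mat U l ** spec_mat U l" using X by metis
    also have "\<dots> = spec_mat U (\<lambda>u. l u * l u)" by (rule spec_mat_mult[OF U])
    finally show ?thesis .
  qed
  have BB: "B ** B = spec_mat U (\<lambda>u. l u * l u)"
    unfolding B_def by (simp add: spec_mat_mult[OF U] abs_mult_self_eq)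
  have pB: "psd B" unfolding B_def by (rule spec_mat_psd) simp
  have "mat_abs X = B"
    unfolding mat_abs_def
  proof (rule the_equality)
    show "psd B \<and> B ** B = adjoint_mat X ** X" using pB BB XX by simp
    fix B' assume "psd B' \<and> B' ** B' = adjoint_mat X ** X"
    thus "B' = B" using psd_sqrt_unique[of B' B] pB BB XX by simp
  qed
  thus ?thesis by (simp add: B_def l_def)
qed

lemma trace_mat_abs:
  assumes herm: "hermitian X" and U: "onb_of U UNIV" and eig: "\<forall>u\<in>U. X *v u = cinner u (X *v u) *s u"
  shows "Re (trace (mat_abs X)) = (\<Sum>u\<in>U. \<bar>Re (cinner u (X *v u))\<bar>)"
  by (simp add: mat_abs_spec[OF assms] spec_mat_trace[OF U])

lemma trace_herm_onb:
  assumes herm: "hermitian X" and U: "onb_of U UNIV"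
  shows "Re (trace X) = (\<Sum>u\<in>U. Re (cinner u (X *v u)))"
  by (simp add: trace_onb[OF U] Re_sum)

lemma quad_onb:
  assumes herm: "hermitian X" and U: "onb_of U UNIV" and eig: "\<forall>u\<in>U. X *v u = cinner u (X *v u) *s u"
  shows "Re (cinner z (X *v z)) = (\<Sum>u\<in>U. Re (cinner u (X *v u)) * (cmod (cinner z u))^2)"
proof -
  have X: "X = spec_mat U (\<lambda>u. Re (cinner u (X *v u)))" by (rule spec_decomp[OF U eig herm])
  have "Re (cinner z (X *v z)) = Re (cinner z (spec_mat U (\<lambda>u. Re (cinner u (X *v u))) *v z))"
    using X by simp
  also have "\<dots> = (\<Sum>u\<in>U. Re (cinner u (X *v u)) * (cmod (cinner u z))^2)"
    by (simp add: spec_mat_quad_gen Re_sum)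
  also have "\<dots> = (\<Sum>u\<in>U. Re (cinner u (X *v u)) * (cmod (cinner z u))^2)"
    by (metis (no_types, lifting) cinner_cnj complex_mod_cnj)
  finally show ?thesis .
qed

lemma fam_weight:
  assumes U: "onb_of U UNIV" and u: "u \<in> U" and fin: "finite I" and orth: "ortho_fam I f"
  shows "0 \<le> (\<Sum>i\<in>I. (cmod (cinner (f i) u))^2)" "(\<Sum>i\<in>I. (cmod (cinner (f i) u))^2) \<le> 1"
proof -
  show "0 \<le> (\<Sum>i\<in>I. (cmod (cinner (f i) u))^2)" by (simp add: sum_nonneg)
  have "cinner u u = 1" using U u by (simp add: onb_orth)
  thus "(\<Sum>i\<in>I. (cmod (cinner (f i) u))^2) \<le> 1" using bessel[OF fin orth, of u] by simp
qed

lemma fam_sum_expand: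
  assumes herm: "hermitian X" and U: "onb_of U UNIV" and eig: "\<forall>u\<in>U. X *v u = cinner u (X *v u) *s u"
  shows "(\<Sum>i\<in>I. Re (cinner (f i) (X *v f i))) =
     (\<Sum>u\<in>U. Re (cinner u (X *v u)) * (\<Sum>i\<in>I. (cmod (cinner (f i) u))^2))"
proof -
  have "(\<Sum>i\<in>I. Re (cinner (f i) (X *v f i))) =
     (\<Sum>i\<in>I. \<Sum>u\<in>U. Re (cinner u (X *v u)) * (cmod (cinner (f i) u))^2)"
    by (rule sum.cong[OF refl], rule quad_onb[OF assms])
  also have "\<dots> = (\<Sum>u\<in>U. \<Sum>i\<in>I. Re (cinner u (X *v u)) * (cmod (cinner (f i) u))^2)"
    by (rule sum.swap)
  also have "\<dots> = (\<Sum>u\<in>U. Re (cinner u (X *v u)) * (\<Sum>i\<in>I. (cmod (cinner (f i) u))^2))"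
    by (simp add: sum_distrib_left)
  finally show ?thesis .
qed

lemma abs_lower:
  assumes herm: "hermitian X" and fin: "finite I" and orth: "ortho_fam I f"
  shows "2 * (\<Sum>i\<in>I. Re (cinner (f i) (X *v f i))) - Re (trace X) \<le> Re (trace (mat_abs X))"
proof -
  obtain U where U: "onb_of U UNIV" "\<forall>u\<in>U. X *v u = cinner u (X *v u) *s u"
    using spectral_full[OF herm] by blast
  define l where "l = (\<lambda>u. Re (cinner u (X *v u)))"
  define p where "p = (\<lambda>u. (\<Sum>i\<in>I. (cmod (cinner (f i) u))^2))"
  have "2 * (\<Sum>i\<in>I. Re (cinner (f i) (X *v f i))) - Re (trace X) = (\<Sum>u\<in>U. l u * (2 * p u - 1))"
    by (simp add: fam_sum_expand[OF herm U] trace_herm_onb[OF herm U(1)] l_def p_def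
        sum_distrib_left algebra_simps sum_subtractf)
  also have "\<dots> \<le> (\<Sum>u\<in>U. \<bar>l u\<bar>)"
  proof (rule sum_mono)
    fix u assume u: "u \<in> U"
    have "0 \<le> p u" "p u \<le> 1" using fam_weight[OF U(1) u fin orth] by (auto simp: p_def)
    hence "\<bar>2 * p u - 1\<bar> \<le> 1" by simp
    hence "\<bar>l u * (2 * p u - 1)\<bar> \<le> \<bar>l u\<bar>" by (simp add: abs_mult mult_left_le)
    thus "l u * (2 * p u - 1) \<le> \<bar>l u\<bar>" by simp
  qed
  also have "\<dots> = Re (trace (mat_abs X))" using trace_mat_abs[OF herm U] by (simp add: l_def)
  finally show ?thesis .
qed

lemma psd_fam_le:
  assumes A: "psd A" and fin: "finite I" and orth: "ortho_fam I f"
  shows "(\<Sum>i\<in>I. Re (cinner (f i) (A *v f i))) \<le> Re (trace A)"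
proof -
  have herm: "hermitian A" using A by (rule psd_herm)
  obtain U where U: "onb_of U UNIV" "\<forall>u\<in>U. A *v u = cinner u (A *v u) *s u"
    using spectral_full[OF herm] by blast
  have "(\<Sum>i\<in>I. Re (cinner (f i) (A *v f i))) =
     (\<Sum>u\<in>U. Re (cinner u (A *v u)) * (\<Sum>i\<in>I. (cmod (cinner (f i) u))^2))"
    by (rule fam_sum_expand[OF herm U])
  also have "\<dots> \<le> (\<Sum>u\<in>U. Re (cinner u (A *v u)))"
  proof (rule sum_mono)
    fix u assume u: "u \<in> U"
    have "0 \<le> Re (cinner u (A *v u))" using A by (rule psd_nonneg)
    thus "Re (cinner u (A *v u)) * (\<Sum>i\<in>I. (cmod (cinner (f i) u))^2) \<le> Re (cinner u (A *v u))"
      using fam_weight[OF U(1) u fin orth] by (simp add: mult_left_le)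
  qed
  also have "\<dots> = Re (trace A)" by (simp add: trace_herm_onb[OF herm U(1)])
  finally show ?thesis .
qed

lemma trace_abs_nonneg:
  assumes herm: "hermitian X"
  shows "0 \<le> Re (trace (mat_abs X))"
proof -
  obtain U where U: "onb_of U UNIV" "\<forall>u\<in>U. X *v u = cinner u (X *v u) *s u"
    using spectral_full[OF herm] by blast
  show ?thesis by (simp add: trace_mat_abs[OF herm U] sum_nonneg)
qed


lemma csub_supp: "csub (supp_op A)"
  unfolding csub_def supp_op_def by (auto simp: cinner_add_right cinner_scale_right)

lemma range_in_supp: "hermitian A \<Longrightarrow> A *v z \<in> supp_op A"
  unfolding supp_op_def ker_op_def by (auto simp: herm_cinner)

lemma perp_supp_ker:
  assumes "hermitian A" "\<forall>s\<in>supp_op A. cinner s z = 0"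
  shows "A *v z = 0"
proof -
  have "cinner (A *v z) (A *v z) = cinner (A *v (A *v z)) z"
    using assms(1) by (simp add: herm_cinner)
  also have "\<dots> = 0" using assms range_in_supp by blast
  finally show ?thesis by (simp add: cinner_self_eq_0)
qed

lemma onb_span_perp:
  assumes "onb_of W V" "\<forall>w\<in>W. cinner w z = 0" "s \<in> V"
  shows "cinner s z = 0"
proof -
  have "s = (\<Sum>w\<in>W. cinner w s *s w)" using assms by (simp add: onb_of_def)
  hence "cinner s z = (\<Sum>w\<in>W. cnj (cinner w s) * cinner w z)"
    by (metis (no_types, lifting) cinner_scale_left cinner_sum_left sum.cong)
  also have "\<dots> = 0" using assms(2) by simp
  finally show ?thesis .
qed

lemma proj_perp:
  assumes "onb_of W V" "w' \<in> W"
  shows "cinner w' (z - (\<Sum>w\<in>W. cinner w z *s w)) = 0"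
proof -
  have fin: "finite W" using assms by (simp add: onb_of_def)
  have "cinner w' (\<Sum>w\<in>W. cinner w z *s w) = (\<Sum>w\<in>W. cinner w z * (if w' = w then 1 else 0))"
    unfolding cinner_sum_right cinner_scale_right
    by (rule sum.cong) (use assms in \<open>auto simp: onb_of_def orthonormal_def\<close>)
  also have "\<dots> = cinner w' z" by (rule sum_delta_fun[OF fin assms(2)])
  finally show ?thesis by (simp add: cinner_diff_right)
qed

lemma apply_proj_supp:
  assumes herm: "hermitian A" and W: "onb_of W (supp_op A)"
  shows "A *v z = A *v (\<Sum>w\<in>W. cinner w z *s w)"
proof -
  have "\<forall>s\<in>supp_op A. cinner s (z - (\<Sum>w\<in>W. cinner w z *s w)) = 0"
    using onb_span_perp[OF W] proj_perp[OF W] by blast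
  hence "A *v (z - (\<Sum>w\<in>W. cinner w z *s w)) = 0" by (rule perp_supp_ker[OF herm])
  thus ?thesis by (simp add: matrix_vector_mult_diff_distrib)
qed

lemma trace_supp_onb:
  assumes herm: "hermitian A" and W: "onb_of W (supp_op A)"
  shows "trace A = (\<Sum>w\<in>W. cinner w (A *v w))"
proof -
  obtain U where U: "onb_of U UNIV" "\<forall>u\<in>U. A *v u = cinner u (A *v u) *s u"
    using spectral_full[OF herm] by blast
  have "trace A = (\<Sum>u\<in>U. cinner u (A *v u))" by (rule trace_onb[OF U(1)])
  also have "\<dots> = (\<Sum>u\<in>U. \<Sum>w\<in>W. cinner w u * cinner u (A *v w))"
  proof (rule sum.cong[OF refl])
    fix u
    show "cinner u (A *v u) = (\<Sum>w\<in>W. cinner w u * cinner u (A *v w))"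
      by (subst apply_proj_supp[OF herm W, of u]) (simp add: mv_sum mv_scale
        cinner_sum_right cinner_scale_right)
  qed
  also have "\<dots> = (\<Sum>w\<in>W. \<Sum>u\<in>U. cinner w u * cinner u (A *v w))" by (rule sum.swap)
  also have "\<dots> = (\<Sum>w\<in>W. cinner w (A *v w))" by (simp add: parseval[OF U(1)])
  finally show ?thesis .
qed

lemma herm_zero: "hermitian (0::complex^'n^'n)"
  by (simp add: hermitian_def adjoint_mat_def vec_eq_iff)

lemma exists_onb_supp: "\<exists>W. onb_of W (supp_op A)"
  using spectral_compressed[OF herm_zero csub_supp] by blast

lemma norm1_cinner: "norm u = 1 \<longleftrightarrow> cinner u u = 1"
proof -
  have "cinner u u = 1 \<longleftrightarrow> (norm u)^2 = 1"
    unfolding cinner_self by (metis of_real_eq_1_iff)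
  also have "\<dots> \<longleftrightarrow> norm u = 1" using norm_ge_zero[of u] by (smt (verit) power2_eq_1_iff)
  finally show ?thesis by simp
qed

lemma density_unit_in_supp:
  assumes "density_op \<rho>"
  shows "\<exists>u. u \<in> supp_op \<rho> \<and> norm u = 1"
proof -
  obtain W where W: "onb_of W (supp_op \<rho>)" using exists_onb_supp by blast
  have herm: "hermitian \<rho>" using assms by (simp add: density_op_def psd_def)
  have "trace \<rho> = (\<Sum>w\<in>W. cinner w (\<rho> *v w))" by (rule trace_supp_onb[OF herm W])
  hence "W \<noteq> {}" using assms by (auto simp: density_op_def)
  then obtain w where "w \<in> W" by blast
  thus ?thesis using W by (auto simp: onb_of_def orthonormal_def norm1_cinner)
qed

lemma ket_bra_apply: "ket_bra \<phi> *v z = cinner \<phi> z *s \<phi>"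
  unfolding ket_bra_def matrix_vector_mult_def cinner_def
  by (simp add: vec_eq_iff sum_distrib_left mult_ac)

lemma ket_bra_herm: "hermitian (ket_bra \<phi>)"
  unfolding hermitian_def adjoint_mat_def ket_bra_def by (simp add: vec_eq_iff mult.commute)

lemma cauchy_unit:
  assumes "cinner a a = 1" "cinner b b = 1"
  shows "cmod (cinner a b) \<le> 1"
proof -
  have "ortho_fam {a} id" using assms by (simp add: ortho_fam_def)
  from bessel[OF _ this, of b] have "(cmod (cinner a b))^2 \<le> 1" using assms by simp
  thus ?thesis using power2_le_imp_le[of "cmod (cinner a b)" 1] by simp
qed


lemma herm_diff: "hermitian A \<Longrightarrow> hermitian B \<Longrightarrow> hermitian (A - B)"
  unfolding hermitian_def adjoint_mat_def by (simp add: vec_eq_iff)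

lemma cube_abs:
  fixes l s2 :: real
  assumes "l^3 = s2 * l" "0 < s2"
  shows "\<bar>l\<bar> = l^2 / sqrt s2"
proof (cases "l = 0")
  case False
  hence "l^2 = s2" using assms(1) by (simp add: power3_eq_cube power2_eq_square)
  hence "\<bar>l\<bar> = sqrt s2" by (metis real_sqrt_abs)
  thus ?thesis using \<open>l^2 = s2\<close> assms(2) by (simp add: real_div_sqrt)
qed simp

lemma pure_td:
  assumes aa: "cinner a a = 1" and bb: "cinner b b = 1"
  shows "0 \<le> trace_dist (ket_bra a) (ket_bra b)"
    "trace_dist (ket_bra a) (ket_bra b) \<le> sqrt (1 - (cmod (cinner a b))^2)"
proof -
  define X where "X = ket_bra a - ket_bra b"
  define g where "g = cinner a b"
  define s2 where "s2 = 1 - (cmod g)^2"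
  have herm: "hermitian X" unfolding X_def by (intro herm_diff ket_bra_herm)
  show "0 \<le> trace_dist (ket_bra a) (ket_bra b)"
    unfolding trace_dist_def X_def[symmetric] using trace_abs_nonneg[OF herm] by simp
  have s2ge: "0 \<le> s2" using cauchy_unit[OF aa bb] by (simp add: s2_def g_def power_le_one)
  have ba: "cinner b a = cnj g" by (simp add: g_def cinner_cnj)
  have gg: "g * cnj g = of_real (1 - s2)" by (simp add: s2_def mult_cnj_self2)
  have Xz: "X *v z = cinner a z *s a - cinner b z *s b" for z
    by (simp add: X_def matrix_vector_mult_diff_rdistrib ket_bra_apply)
  have X3: "X *v (X *v (X *v z)) = of_real s2 *s (X *v z)" for z
  proof -
    have e: "X *v (X *v (X *v z)) = ((cinner a z) * (1 - g * cnj g)) *s a - ((cinner b z) * (1 - g * cnj g)) *s b"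
      by (simp add: Xz cinner_diff_right cinner_scale_right aa bb ba g_def[symmetric]
          vec_eq_iff algebra_simps)
    show ?thesis unfolding e gg by (simp add: Xz vec_eq_iff algebra_simps)
  qed
  obtain U where U: "onb_of U UNIV" "\<forall>u\<in>U. X *v u = cinner u (X *v u) *s u"
    using spectral_full[OF herm] by blast
  define l where "l = (\<lambda>u. Re (cinner u (X *v u)))"
  have Xu: "X *v u = of_real (l u) *s u" if "u \<in> U" for u
    using U(2) that eig_real[OF herm] l_def by metis
  have unz: "u \<noteq> 0" if "u \<in> U" for u
    using onb_orth[OF U(1) that that] by auto
  have cube: "(l u)^3 = s2 * l u" if u: "u \<in> U" for u
  proof -
    have "of_real ((l u)^3) *s u = X *v (X *v (X *v u))"
      by (simp add: Xu[OF u] mv_scale vector_smult_assoc power3_eq_cube)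
    also have "\<dots> = of_real (s2 * l u) *s u" by (subst X3) (simp add: Xu[OF u] vector_smult_assoc)
    finally have "of_real ((l u)^3) *s u = of_real (s2 * l u) *s u" .
    hence "(of_real ((l u)^3)::complex) = of_real (s2 * l u)" using unz[OF u]
      by (simp only: vector_mul_rcancel) simp
    thus ?thesis by (simp only: of_real_eq_iff)
  qed
  have sumsq: "(\<Sum>u\<in>U. (l u)^2) = 2 * s2"
  proof -
    have "of_real (\<Sum>u\<in>U. (l u)^2) = (\<Sum>u\<in>U. cinner u (X *v (X *v u)))"
      unfolding of_real_sum
    proof (rule sum.cong[OF refl])
      fix u assume u: "u \<in> U"
      have "cinner u (X *v (X *v u)) = of_real (l u * l u) * cinner u u"
        by (simp add: Xu[OF u] mv_scale cinner_scale_right)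
      thus "of_real ((l u)^2) = cinner u (X *v (X *v u))"
        using U(1) u by (simp add: onb_orth power2_eq_square)
    qed
    also have "\<dots> = (\<Sum>u\<in>U. cinner a u * cinner u a - g * (cinner b u * cinner u a)
        - cnj g * (cinner a u * cinner u b) + cinner b u * cinner u b)"
      by (rule sum.cong[OF refl]) (simp add: Xz cinner_diff_right cinner_add_right cinner_scale_right aa bb ba
          g_def[symmetric] algebra_simps)
    also have "\<dots> = 1 - g * cnj g - cnj g * g + 1"
      by (simp add: sum.distrib sum_subtractf sum_distrib_left[symmetric] parseval[OF U(1)] aa bb ba
          g_def[symmetric])
    also have "\<dots> = of_real (2 * s2)" using gg by (simp add: mult.commute)
    finally show ?thesis by (simp only: of_real_eq_iff)
  qed
  have tr: "Re (trace (mat_abs X)) = (\<Sum>u\<in>U. \<bar>l u\<bar>)"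
    using trace_mat_abs[OF herm U] l_def by simp
  have "(\<Sum>u\<in>U. \<bar>l u\<bar>) \<le> 2 * sqrt s2"
  proof (cases "s2 = 0")
    case True
    have "l u = 0" if "u \<in> U" for u using cube[OF that] True by simp
    thus ?thesis by (simp add: True)
  next
    case False
    hence pos: "0 < s2" using s2ge by simp
    have "(\<Sum>u\<in>U. \<bar>l u\<bar>) = (\<Sum>u\<in>U. (l u)^2 / sqrt s2)"
      by (rule sum.cong[OF refl]) (rule cube_abs[OF cube pos])
    also have "\<dots> = 2 * s2 / sqrt s2" by (simp add: sum_divide_distrib[symmetric] sumsq)
    also have "\<dots> = 2 * sqrt s2" using pos by (metis less_imp_le real_div_sqrt times_divide_eq_right)
    finally show ?thesis by simp
  qed
  thus "trace_dist (ket_bra a) (ket_bra b) \<le> sqrt (1 - (cmod (cinner a b))^2)"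
    unfolding trace_dist_def X_def[symmetric] using tr by (simp add: s2_def g_def)
qed


lemma wc_facts:
  assumes d1: "density_op \<rho>1" and d2: "density_op \<rho>2"
  shows "0 \<le> wc_dist \<rho>1 \<rho>2" "wc_dist \<rho>1 \<rho>2 \<le> 1"
    "\<And>u v. u \<in> supp_op \<rho>1 \<Longrightarrow> v \<in> supp_op \<rho>2 \<Longrightarrow> norm u = 1 \<Longrightarrow> norm v = 1 \<Longrightarrow>
       (cmod (cinner u v))^2 \<le> 1 - (wc_dist \<rho>1 \<rho>2)^2"
proof -
  define S where "S = {trace_dist (ket_bra \<phi>1) (ket_bra \<phi>2) | \<phi>1 \<phi>2.
      \<phi>1 \<in> supp_op \<rho>1 \<and> \<phi>2 \<in> supp_op \<rho>2 \<and> norm \<phi>1 = 1 \<and> norm \<phi>2 = 1}"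
  have w: "wc_dist \<rho>1 \<rho>2 = Inf S" by (simp add: wc_dist_def S_def)
  have mem: "trace_dist (ket_bra u) (ket_bra v) \<in> S"
    if "u \<in> supp_op \<rho>1" "v \<in> supp_op \<rho>2" "norm u = 1" "norm v = 1" for u v
    using that unfolding S_def by blast
  have lb: "0 \<le> x" if "x \<in> S" for x
    using that pure_td(1) unfolding S_def by (auto simp: norm1_cinner)
  have ub: "trace_dist (ket_bra u) (ket_bra v) \<le> sqrt (1 - (cmod (cinner u v))^2)"
    if "norm u = 1" "norm v = 1" for u v
    using that pure_td(2) by (simp add: norm1_cinner)
  obtain u0 where u0: "u0 \<in> supp_op \<rho>1" "norm u0 = 1" using density_unit_in_supp[OF d1] by blast
  obtain v0 where v0: "v0 \<in> supp_op \<rho>2" "norm v0 = 1" using density_unit_in_supp[OF d2] by blast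
  have ne: "S \<noteq> {}" using mem[OF u0(1) v0(1) u0(2) v0(2)] by blast
  have bdd: "bdd_below S" using lb by (auto simp: bdd_below_def)
  show w0: "0 \<le> wc_dist \<rho>1 \<rho>2" unfolding w using ne lb by (simp add: cInf_greatest)
  have wle: "wc_dist \<rho>1 \<rho>2 \<le> sqrt (1 - (cmod (cinner u v))^2)"
    if "u \<in> supp_op \<rho>1" "v \<in> supp_op \<rho>2" "norm u = 1" "norm v = 1" for u v
    unfolding w using cInf_lower[OF mem[OF that] bdd] ub[OF that(3,4)] by linarith
  have cs: "0 \<le> 1 - (cmod (cinner u v))^2" if "norm u = 1" "norm v = 1" for u v
    using cauchy_unit[of u v] that by (simp add: norm1_cinner power_le_one)
  show "wc_dist \<rho>1 \<rho>2 \<le> 1"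
    using wle[OF u0(1) v0(1) u0(2) v0(2)] cs[OF u0(2) v0(2)]
    by (smt (verit) norm_ge_zero real_sqrt_le_1_iff zero_le_power2)
  fix u v assume uv: "u \<in> supp_op \<rho>1" "v \<in> supp_op \<rho>2" "norm u = 1" "norm v = 1"
  have "(wc_dist \<rho>1 \<rho>2)^2 \<le> (sqrt (1 - (cmod (cinner u v))^2))^2"
    using wle[OF uv] w0 by (simp add: power_mono)
  also have "\<dots> = 1 - (cmod (cinner u v))^2" using cs[OF uv(3,4)] by simp
  finally show "(cmod (cinner u v))^2 \<le> 1 - (wc_dist \<rho>1 \<rho>2)^2" by simp
qed


definition gf :: "real \<Rightarrow> real \<Rightarrow> real \<Rightarrow> real" where
  "gf c x y = sqrt ((1 - c^2) * (x + y)^2 + c^2 * (x - y)^2)"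

lemma gf_alt:
  assumes "0 \<le> c" "c \<le> 1"
  shows "gf c x y = sqrt ((sqrt (1 - c^2) * (x + y))^2 + (c * (x - y))^2)"
proof -
  have "0 \<le> 1 - c^2" using assms by (simp add: power_le_one)
  thus ?thesis by (simp add: gf_def power_mult_distrib)
qed

lemma gf_add:
  assumes "0 \<le> c" "c \<le> 1"
  shows "gf c (x1 + x2) (y1 + y2) \<le> gf c x1 y1 + gf c x2 y2"
proof -
  let ?s = "sqrt (1 - c^2)"
  have "gf c (x1 + x2) (y1 + y2) = sqrt ((?s * (x1 + y1) + ?s * (x2 + y2))^2 + (c * (x1 - y1) + c * (x2 - y2))^2)"
    by (simp add: gf_alt[OF assms] algebra_simps)
  also have "\<dots> \<le> sqrt ((?s * (x1 + y1))^2 + (c * (x1 - y1))^2) + sqrt ((?s * (x2 + y2))^2 + (c * (x2 - y2))^2)"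
    by (rule real_sqrt_sum_squares_triangle_ineq)
  also have "\<dots> = gf c x1 y1 + gf c x2 y2" by (simp add: gf_alt[OF assms])
  finally show ?thesis .
qed

lemma gf_sum:
  assumes "0 \<le> c" "c \<le> 1"
  shows "gf c (\<Sum>i\<in>S. x i) (\<Sum>i\<in>S. y i) \<le> (\<Sum>i\<in>S. gf c (x i) (y i))"
proof (induct S rule: infinite_finite_induct)
  case (infinite A) thus ?case by (simp add: gf_def)
next
  case empty thus ?case by (simp add: gf_def)
next
  case (insert a F)
  have "gf c (\<Sum>i\<in>insert a F. x i) (\<Sum>i\<in>insert a F. y i) = gf c (x a + (\<Sum>i\<in>F. x i)) (y a + (\<Sum>i\<in>F. y i))"
    using insert by simp
  also have "\<dots> \<le> gf c (x a) (y a) + gf c (\<Sum>i\<in>F. x i) (\<Sum>i\<in>F. y i)" by (rule gf_add[OF assms])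
  also have "\<dots> \<le> gf c (x a) (y a) + (\<Sum>i\<in>F. gf c (x i) (y i))" using insert by simp
  finally show ?case using insert by simp
qed

lemma gf_sq: "gf c x y = sqrt ((x + y)^2 - 4 * c^2 * x * y)"
  unfolding gf_def by (simp add: algebra_simps power2_eq_square)

lemma gf_zero_left: "0 \<le> y \<Longrightarrow> gf c 0 y = y"
  by (simp add: gf_sq)

lemma gf_le_sum:
  assumes "0 \<le> x" "0 \<le> y"
  shows "gf c x y \<le> x + y"
proof -
  have "(x + y)^2 - 4 * c^2 * x * y \<le> (x + y)^2" using assms by simp
  hence "gf c x y \<le> sqrt ((x + y)^2)" unfolding gf_sq by (rule real_sqrt_le_mono)
  thus ?thesis using assms by simp
qed

lemma gf_mono:
  assumes "0 \<le> x" "0 \<le> y" "m^2 \<le> c^2"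
  shows "gf c x y \<le> gf m x y"
  unfolding gf_sq
proof (rule real_sqrt_le_mono)
  have "m^2 * (x * y) \<le> c^2 * (x * y)" using assms by (simp add: mult_right_mono)
  thus "(x + y)^2 - 4 * c^2 * x * y \<le> (x + y)^2 - 4 * m^2 * x * y" by (simp add: mult.assoc)
qed

lemma gf_one: "gf 1 x y = \<bar>x - y\<bar>"
  by (simp add: gf_def)

lemma gf_final:
  assumes "0 \<le> c" "c \<le> 1" "p1 + p2 = 1" "q1 + q2 = 1" "p1 - q1 = t"
  shows "2 * sqrt (1 - c^2 + c^2 * t^2) \<le> gf c p1 q1 + gf c p2 q2"
proof -
  let ?s = "sqrt (1 - c^2)"
  have s2: "?s^2 = 1 - c^2" using assms by (simp add: power_le_one)
  have "gf c p2 q2 = sqrt ((?s * (p2 + q2))^2 + (c * (q2 - p2))^2)"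
  proof -
    have "(c * (p2 - q2))^2 = (c * (q2 - p2))^2" by (simp add: power2_eq_square algebra_simps)
    thus ?thesis by (simp add: gf_alt[OF assms(1,2)])
  qed
  hence "gf c p1 q1 + gf c p2 q2 = sqrt ((?s * (p1 + q1))^2 + (c * (p1 - q1))^2) + sqrt ((?s * (p2 + q2))^2 + (c * (q2 - p2))^2)"
    by (simp add: gf_alt[OF assms(1,2)])
  also have "\<dots> \<ge> sqrt ((?s * (p1 + q1) + ?s * (p2 + q2))^2 + (c * (p1 - q1) + c * (q2 - p2))^2)"
    by (rule real_sqrt_sum_squares_triangle_ineq)
  finally have ineq: "sqrt ((?s * (p1 + q1) + ?s * (p2 + q2))^2 + (c * (p1 - q1) + c * (q2 - p2))^2) \<le> gf c p1 q1 + gf c p2 q2" .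
  have "?s * (p1 + q1) + ?s * (p2 + q2) = ?s * ((p1 + p2) + (q1 + q2))" by (simp add: algebra_simps)
  hence e1: "?s * (p1 + q1) + ?s * (p2 + q2) = 2 * ?s" using assms(3,4) by simp
  have "c * (p1 - q1) + c * (q2 - p2) = c * ((p1 - q1) - (p2 - q2))" by (simp add: algebra_simps)
  moreover have "p2 - q2 = - t" using assms(3,4,5) by linarith
  ultimately have e2: "c * (p1 - q1) + c * (q2 - p2) = 2 * c * t" using assms(5) by simp
  have "(2 * ?s)^2 + (2 * c * t)^2 = 4 * (1 - c^2 + c^2 * t^2)"
    using s2 by (simp add: power_mult_distrib algebra_simps)
  moreover have s4: "sqrt 4 = 2" using real_sqrt_abs[of 2] by simp
  ultimately have "sqrt ((2 * ?s)^2 + (2 * c * t)^2) = 2 * sqrt (1 - c^2 + c^2 * t^2)"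
    by (simp only: real_sqrt_mult s4)
  thus ?thesis using ineq e1 e2 by simp
qed

lemma block_opt:
  assumes a: "0 \<le> a" and b: "0 \<le> b" and mu0: "0 \<le> mu" and muc: "mu \<le> c^2" and mu1: "mu < 1"
  shows "\<exists>p q. p^2 + q^2 = 1 \<and> (mu = 0 \<longrightarrow> q = 0) \<and>
     gf c a b \<le> a * (2 * p^2 - 1) - b * (2 * (sqrt mu * p + sqrt (1 - mu) * q)^2 - 1)"
proof (cases "mu = 0")
  case True
  have "gf c a b \<le> a * (2 * 1^2 - 1) - b * (2 * (sqrt mu * 1 + sqrt (1 - mu) * 0)^2 - 1)"
    using gf_le_sum[OF a b] True by simp
  thus ?thesis using True by (intro exI[of _ 1] exI[of _ 0]) simp
next
  case False
  hence mupos: "0 < mu" using mu0 by simp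
  define m where "m = sqrt mu"
  define n where "n = sqrt (1 - mu)"
  have m2: "m^2 = mu" using mu0 by (simp add: m_def)
  have n2: "n^2 = 1 - mu" using mu0 mu1 by (simp add: n_def)
  have m0: "0 \<le> m" "0 \<le> n" using mu0 mu1 by (simp_all add: m_def n_def)
  define N where "N = gf m a b"
  have gfm: "gf c a b \<le> N" unfolding N_def using a b muc m2 by (intro gf_mono) auto
  have N2: "N^2 = (a - b * (2 * mu - 1))^2 + 4 * b^2 * mu * (1 - mu)"
  proof -
    have "0 \<le> (a + b)^2 - 4 * m^2 * a * b"
    proof -
      have "m^2 * (a * b) \<le> 1 * (a * b)" using m2 mu1 a b by (intro mult_right_mono) auto
      hence "4 * m^2 * a * b \<le> 4 * a * b" by (simp add: mult.assoc)
      moreover have "4 * a * b \<le> (a + b)^2"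
      proof -
        have "0 \<le> (a - b)^2" by simp
        thus ?thesis by (simp add: power2_eq_square algebra_simps)
      qed
      ultimately show ?thesis by simp
    qed
    hence "N^2 = (a + b)^2 - 4 * m^2 * a * b" by (simp add: N_def gf_sq)
    hence "N^2 = (a + b)^2 - 4 * mu * a * b" using m2 by simp
    thus ?thesis by (simp add: power2_eq_square algebra_simps)
  qed
  have "0 \<le> 1 - m^2" using m2 mu1 by simp
  hence N0: "0 \<le> N" by (simp add: N_def gf_def)
  show ?thesis
  proof (cases "N = 0")
    case True
    have t1: "0 \<le> (a - b * (2 * mu - 1))^2" by simp
    have t2: "0 \<le> 4 * b^2 * mu * (1 - mu)" using mupos mu1 by simp
    have N2': "(a - b * (2 * mu - 1))^2 + 4 * b^2 * mu * (1 - mu) = 0" using N2 True by simp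
    have "(a - b * (2 * mu - 1))^2 = 0" using N2' t1 t2 by linarith
    moreover have "4 * b^2 * mu * (1 - mu) = 0" using N2' t1 t2 by linarith
    ultimately have z1: "a - b * (2 * mu - 1) = 0" and "b = 0" using mupos mu1 by simp_all
    hence "a = 0" by simp
    have "gf c a b \<le> a * (2 * 1^2 - 1) - b * (2 * (sqrt mu * 1 + sqrt (1 - mu) * 0)^2 - 1)"
      using \<open>a = 0\<close> \<open>b = 0\<close> by (simp add: gf_def)
    thus ?thesis using False by (intro exI[of _ 1] exI[of _ 0]) simp
  next
    case False
    hence Npos: "0 < N" using N0 by simp
    define C where "C = (a - b * (2 * mu - 1)) / N"
    define S where "S = - 2 * b * m * n / N"
    have CS: "C^2 + S^2 = 1"
    proof -
      have "C^2 + S^2 = ((a - b * (2 * mu - 1))^2 + 4 * b^2 * m^2 * n^2) / N^2"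
        by (simp add: C_def S_def power_divide add_divide_distrib power_mult_distrib)
      also have "\<dots> = N^2 / N^2" using N2 m2 n2 by (simp add: mult.assoc)
      finally show ?thesis using Npos by simp
    qed
    have "0 \<le> 2 * b * m * n" using b m0 by simp
    hence Sle: "S \<le> 0" using Npos unfolding S_def by (simp add: divide_nonpos_pos)
    have "C^2 \<le> 1" using CS zero_le_power2[of S] by linarith
    hence "\<bar>C\<bar> \<le> 1" by (simp add: abs_square_le_1)
    hence Cb: "-1 \<le> C" "C \<le> 1" by linarith+
    define p where "p = sqrt ((1 + C) / 2)"
    define q where "q = - sqrt ((1 - C) / 2)"
    have p2: "p^2 = (1 + C) / 2" using Cb by (simp add: p_def)
    have q2: "q^2 = (1 - C) / 2" using Cb by (simp add: q_def)
    have pq: "2 * p * q = S"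
    proof -
      have "(p * q)^2 = p^2 * q^2" by (simp add: power_mult_distrib)
      also have "\<dots> = (1 + C) / 2 * ((1 - C) / 2)" by (simp only: p2 q2)
      also have "\<dots> = (1 - C^2) / 4" by (simp add: power2_eq_square algebra_simps)
      finally have "(p * q)^2 = (1 - C^2) / 4" .
      hence "(p * q)^2 = (S / 2)^2" using CS by (simp add: power_divide)
      moreover have "p * q \<le> 0" using Cb by (simp add: p_def q_def)
      moreover have "S / 2 \<le> 0" using Sle by simp
      ultimately have "p * q = S / 2" by (smt (verit) power2_eq_iff)
      thus ?thesis by simp
    qed
    have "a * (2 * p^2 - 1) - b * (2 * (sqrt mu * p + sqrt (1 - mu) * q)^2 - 1)
        = a * C - b * ((2 * mu - 1) * C + 2 * m * n * S)"
    proof -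
      have "(m * p + n * q)^2 = m^2 * p^2 + m * n * (2 * p * q) + n^2 * q^2"
        by (simp add: power2_eq_square algebra_simps)
      hence "2 * (m * p + n * q)^2 - 1 = (2 * mu - 1) * C + 2 * m * n * S"
        using m2 n2 p2 q2 pq by (simp add: algebra_simps add_divide_distrib diff_divide_distrib)
      hence E1: "2 * (sqrt mu * p + sqrt (1 - mu) * q)^2 - 1 = (2 * mu - 1) * C + 2 * m * n * S"
        by (simp only: m_def n_def)
      have E0: "2 * p^2 - 1 = C" using p2 by simp
      show ?thesis by (simp only: E0 E1)
    qed
    also have "\<dots> = ((a - b * (2 * mu - 1))^2 + 4 * b^2 * m^2 * n^2) / N"
      using Npos by (simp add: C_def S_def power2_eq_square field_simps)
    also have "\<dots> = N^2 / N"
    proof -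
      have "4 * b^2 * m^2 * n^2 = 4 * b^2 * mu * (1 - mu)" using m2 n2 by (simp add: mult.assoc)
      thus ?thesis using N2 by simp
    qed
    also have "\<dots> = N" using Npos by (simp add: power2_eq_square)
    finally have "gf c a b \<le> a * (2 * p^2 - 1) - b * (2 * (sqrt mu * p + sqrt (1 - mu) * q)^2 - 1)"
      using gfm by simp
    moreover have "p^2 + q^2 = 1" using p2 q2 by (simp add: field_simps)
    ultimately show ?thesis using \<open>mu \<noteq> 0\<close> by blast
  qed
qed


lemma density_herm: "density_op \<rho> \<Longrightarrow> hermitian \<rho>"
  by (simp add: density_op_def psd_def)
lemma density_psd: "density_op \<rho> \<Longrightarrow> psd \<rho>"
  by (simp add: density_op_def)

lemma onb_ortho_fam: "onb_of U V \<Longrightarrow> ortho_fam U id"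
  by (simp add: onb_of_def orthonormal_def ortho_fam_def)

lemma density_trace_onb:
  assumes "density_op \<rho>" "onb_of U UNIV"
  shows "(\<Sum>u\<in>U. Re (cinner (id u) (\<rho> *v id u))) = 1"
  using trace_herm_onb[OF density_herm[OF assms(1)] assms(2)] assms(1)
  by (simp add: density_op_def)

lemma helstrom_trivial:
  fixes \<rho>1 \<rho>2 :: "complex^'a^'a"
  assumes d1: "density_op \<rho>1" and d2: "density_op \<rho>2"
  shows "\<exists>I (f::complex^'a \<Rightarrow> complex^'a). finite I \<and> ortho_fam I f \<and>
     \<bar>x - y\<bar> \<le> x * (2 * (\<Sum>i\<in>I. Re (cinner (f i) (\<rho>1 *v f i))) - 1) - y * (2 * (\<Sum>i\<in>I. Re (cinner (f i) (\<rho>2 *v f i))) - 1)"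
proof (cases "y \<le> x")
  case True
  obtain U where U: "onb_of (U::(complex^'a) set) UNIV"
    using spectral_full[OF herm_zero] by blast
  have "finite U" using U by (simp add: onb_of_def)
  moreover have "ortho_fam U id" using U by (rule onb_ortho_fam)
  moreover have "\<bar>x - y\<bar> \<le> x * (2 * (\<Sum>i\<in>U. Re (cinner (id i) (\<rho>1 *v id i))) - 1) - y * (2 * (\<Sum>i\<in>U. Re (cinner (id i) (\<rho>2 *v id i))) - 1)"
    using density_trace_onb[OF d1 U] density_trace_onb[OF d2 U] True by simp
  ultimately show ?thesis by blast
next
  case False
  have "\<bar>x - y\<bar> \<le> x * (2 * (\<Sum>i\<in>{}. Re (cinner (id i) (\<rho>1 *v id i))) - 1) - y * (2 * (\<Sum>i\<in>{}. Re (cinner (id i) (\<rho>2 *v id i))) - 1)"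
    using False by simp
  moreover have "ortho_fam {} (id::complex^'a \<Rightarrow> complex^'a)" by (simp add: ortho_fam_def)
  ultimately show ?thesis by blast
qed


lemma helstrom_jordan:
  fixes \<rho>1 \<rho>2 :: "complex^'a^'a"
  assumes d1: "density_op \<rho>1" and d2: "density_op \<rho>2" and c0: "0 \<le> c" and c1: "c < 1"
    and ov: "\<And>u v. u \<in> supp_op \<rho>1 \<Longrightarrow> v \<in> supp_op \<rho>2 \<Longrightarrow> norm u = 1 \<Longrightarrow> norm v = 1 \<Longrightarrow> cmod (cinner u v) \<le> c"
    and x0: "0 \<le> x" and y0: "0 \<le> y"
  shows "\<exists>I (f::complex^'a \<Rightarrow> complex^'a). finite I \<and> ortho_fam I f \<and>
     gf c x y \<le> x * (2 * (\<Sum>i\<in>I. Re (cinner (f i) (\<rho>1 *v f i))) - 1) - y * (2 * (\<Sum>i\<in>I. Re (cinner (f i) (\<rho>2 *v f i))) - 1)"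
proof -
  have h1: "hermitian \<rho>1" and h2: "hermitian \<rho>2" using d1 d2 by (simp_all add: density_herm)
  have ps1: "psd \<rho>1" and ps2: "psd \<rho>2" using d1 d2 by (simp_all add: density_psd)
  obtain W2 where W2: "onb_of W2 (supp_op \<rho>2)" using exists_onb_supp by blast
  define Q where "Q = spec_mat W2 (\<lambda>_. 1)"
  have Qh: "hermitian Q" unfolding Q_def by (rule spec_mat_herm)
  have Qapp: "Q *v z = (\<Sum>w\<in>W2. cinner w z *s w)" for z
    unfolding Q_def spec_mat_apply by simp
  have Qin: "Q *v z \<in> supp_op \<rho>2" for z
    unfolding Qapp using W2 csub_supp[of \<rho>2]
    by (intro csub_sum) (auto simp: onb_of_def csub_def)
  have Qfix: "Q *v v = v" if "v \<in> supp_op \<rho>2" for v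
    using W2 that by (simp add: Qapp onb_of_def)
  have QQ: "Q *v (Q *v z) = Q *v z" for z using Qfix[OF Qin] .
  have r2Q: "\<rho>2 *v (Q *v z) = \<rho>2 *v z" for z
    using apply_proj_supp[OF h2 W2, of z] by (simp add: Qapp)
  have Qinner: "cinner (Q *v z) (Q *v z') = cinner z (Q *v z')" for z z'
    using herm_cinner[OF Qh, of z "Q *v z'"] QQ by simp
  have quad2: "cinner z (\<rho>2 *v z) = cinner (Q *v z) (\<rho>2 *v (Q *v z))" for z
  proof -
    have "cinner z (\<rho>2 *v z) = cinner z (Q *v (\<rho>2 *v (Q *v z)))"
      using r2Q[of z] Qfix[OF range_in_supp[OF h2, of "Q *v z"]] by simp
    also have "\<dots> = cinner (Q *v z) (\<rho>2 *v (Q *v z))" by (simp add: herm_cinner[OF Qh])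
    finally show ?thesis .
  qed
  obtain W1 where W1: "onb_of W1 (supp_op \<rho>1)"
    and diag: "\<forall>w\<in>W1. \<forall>w'\<in>W1. w \<noteq> w' \<longrightarrow> cinner w (Q *v w') = 0"
    using spectral_compressed[OF Qh csub_supp] by blast
  have finW1: "finite W1" and W1sub: "W1 \<subseteq> supp_op \<rho>1" using W1 by (auto simp: onb_of_def)
  have W1on: "w \<in> W1 \<Longrightarrow> w' \<in> W1 \<Longrightarrow> cinner w w' = (if w = w' then 1 else 0)" for w w'
    using onb_orth[OF W1] by blast
  define mu where "mu = (\<lambda>w. Re (cinner w (Q *v w)))"
  have wQw: "cinner w (Q *v w) = of_real (mu w)" for w
    unfolding mu_def by (rule herm_real[OF Qh])
  have QwQw: "cinner (Q *v w) (Q *v w) = of_real (mu w)" for w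
    using Qinner wQw by simp
  have mu0: "0 \<le> mu w" for w
    using Re_cinner_self_ge0[of "Q *v w"] QwQw by simp
  have wQw': "cinner w' (Q *v w) = (if w' = w then of_real (mu w) else 0)"
    if "w \<in> W1" "w' \<in> W1" for w w'
    using diag that wQw by auto
  have muc: "mu w \<le> c^2" if w: "w \<in> W1" for w
  proof (cases "Q *v w = 0")
    case True thus ?thesis using wQw[of w] by simp
  next
    case False
    define nq where "nq = norm (Q *v w)"
    have nqpos: "0 < nq" using False by (simp add: nq_def)
    have nq2: "nq^2 = mu w" using QwQw[of w] unfolding nq_def norm_sq_cinner by simp
    define v where "v = (1 / nq) *\<^sub>R (Q *v w)"
    have vs: "v \<in> supp_op \<rho>2" unfolding v_def using Qin csub_supp[of \<rho>2]
      by (simp add: cscale_real[symmetric] csub_def)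
    have vn: "norm v = 1" using nqpos by (simp add: v_def nq_def)
    have wn: "norm w = 1" using W1on[OF w w] by (simp add: norm1_cinner)
    have "cmod (cinner w v) = mu w / nq"
      using mu0[of w] nqpos by (simp add: v_def cinner_real_scale_right wQw norm_mult norm_divide)
    also have "\<dots> = nq" using nq2 nqpos by (metis power2_eq_square nonzero_mult_div_cancel_right less_irrefl)
    finally have "nq \<le> c" using ov[OF subsetD[OF W1sub w] vs wn vn] by simp
    hence "nq^2 \<le> c^2" using nqpos by (simp add: power_mono)
    thus ?thesis using nq2 by simp
  qed
  have mu1: "mu w < 1" if "w \<in> W1" for w
  proof -
    have "c * c \<le> c" using c0 c1 by (simp add: mult_left_le_one_le)
    hence "c^2 < 1" using c1 by (simp add: power2_eq_square)
    thus ?thesis using muc[OF that] by simp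
  qed
  define k where "k = (\<lambda>w. 1 / sqrt (mu w * (1 - mu w)))"
  define e where "e = (\<lambda>w. k w *\<^sub>R (Q *v w - of_real (mu w) *s w))"
  have we: "cinner w' (e w) = 0" if "w \<in> W1" "w' \<in> W1" for w w'
    unfolding e_def using that
    by (simp add: cinner_real_scale_right cinner_diff_right cinner_scale_right wQw' W1on)
  have ee: "cinner (e w') (e w) = (if w' = w then 1 else 0)"
    if w: "w \<in> W1" and w': "w' \<in> W1" and pos: "0 < mu w" for w w'
  proof -
    have "cinner (e w') (e w) = of_real (k w' * k w) *
        (cinner (Q *v w') (Q *v w) - of_real (mu w) * cinner (Q *v w') w
         - of_real (mu w') * cinner w' (Q *v w) + of_real (mu w') * of_real (mu w) * cinner w' w)"
      unfolding e_def
      by (simp add: cinner_real_scale_right cinner_real_scale_left cinner_diff_right cinner_diff_left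
          cinner_scale_right cinner_scale_left algebra_simps)
    also have "\<dots> = (if w' = w then of_real (k w * k w * (mu w - mu w * mu w)) else 0)"
    proof -
      have a1: "cinner (Q *v w') (Q *v w) = (if w' = w then of_real (mu w) else 0)"
        using Qinner wQw'[OF w w'] by simp
      have a2: "cinner (Q *v w') w = (if w' = w then of_real (mu w) else 0)"
      proof -
        have "cinner (Q *v w') w = cnj (cinner w (Q *v w'))" by (simp add: cinner_cnj)
        thus ?thesis using wQw'[OF w' w] by auto
      qed
      show ?thesis using wQw'[OF w w'] a1 a2 W1on[OF w' w] by (simp add: algebra_simps)
    qed
    also have "\<dots> = (if w' = w then 1 else 0)"
    proof -
      have mpos: "0 < mu w * (1 - mu w)" using pos mu1[OF w] by simp
      hence "k w * k w = 1 / (mu w * (1 - mu w))"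
        by (simp add: k_def)
      moreover have "mu w - mu w * mu w = mu w * (1 - mu w)" by (simp add: algebra_simps)
      ultimately have "k w * k w * (mu w - mu w * mu w) = 1" using mpos pos mu1[OF w] by simp
      thus ?thesis by simp
    qed
    finally show ?thesis .
  qed
  have r1e: "\<rho>1 *v e w = 0" if "w \<in> W1" for w
  proof (rule perp_supp_ker[OF h1], intro ballI)
    fix s assume "s \<in> supp_op \<rho>1"
    show "cinner s (e w) = 0"
      by (rule onb_span_perp[OF W1 _ \<open>s \<in> supp_op \<rho>1\<close>]) (use we that in blast)
  qed
  define r where "r = (\<lambda>w. Re (cinner w (\<rho>1 *v w)))"
  define sv where "sv = (\<lambda>w. Re (cinner (Q *v w) (\<rho>2 *v (Q *v w))) / mu w)"
  have r0: "0 \<le> r w" for w unfolding r_def by (rule psd_nonneg[OF ps1])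
  have sv0: "0 \<le> sv w" for w unfolding sv_def using psd_nonneg[OF ps2] mu0 by simp
  have "\<forall>w\<in>W1. \<exists>pq::real\<times>real. (fst pq)^2 + (snd pq)^2 = 1 \<and> (mu w = 0 \<longrightarrow> snd pq = 0) \<and>
      gf c (x * r w) (y * sv w) \<le> (x * r w) * (2 * (fst pq)^2 - 1)
         - (y * sv w) * (2 * (sqrt (mu w) * fst pq + sqrt (1 - mu w) * snd pq)^2 - 1)"
  proof
    fix w assume w: "w \<in> W1"
    from block_opt[OF mult_nonneg_nonneg[OF x0 r0] mult_nonneg_nonneg[OF y0 sv0] mu0 muc[OF w] mu1[OF w]]
    obtain p q where "p^2 + q^2 = 1 \<and> (mu w = 0 \<longrightarrow> q = 0) \<and>
      gf c (x * r w) (y * sv w) \<le> (x * r w) * (2 * p^2 - 1)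
         - (y * sv w) * (2 * (sqrt (mu w) * p + sqrt (1 - mu w) * q)^2 - 1)" by blast
    thus "\<exists>pq::real\<times>real. (fst pq)^2 + (snd pq)^2 = 1 \<and> (mu w = 0 \<longrightarrow> snd pq = 0) \<and>
      gf c (x * r w) (y * sv w) \<le> (x * r w) * (2 * (fst pq)^2 - 1)
         - (y * sv w) * (2 * (sqrt (mu w) * fst pq + sqrt (1 - mu w) * snd pq)^2 - 1)"
      by (intro exI[of _ "(p, q)"]) simp
  qed
  then obtain F where F: "\<forall>w\<in>W1. (fst (F w))^2 + (snd (F w))^2 = 1 \<and> (mu w = 0 \<longrightarrow> snd (F w) = 0) \<and>
      gf c (x * r w) (y * sv w) \<le> (x * r w) * (2 * (fst (F w))^2 - 1)
         - (y * sv w) * (2 * (sqrt (mu w) * fst (F w) + sqrt (1 - mu w) * snd (F w))^2 - 1)"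
    by (metis (no_types, lifting) bchoice)
  define P where "P = (\<lambda>w. fst (F w))"
  define Qc where "Qc = (\<lambda>w. snd (F w))"
  have PQ1: "(P w)^2 + (Qc w)^2 = 1" if "w \<in> W1" for w using F that by (simp add: P_def Qc_def)
  have PQ0: "mu w = 0 \<Longrightarrow> Qc w = 0" if "w \<in> W1" for w using F that by (simp add: Qc_def)
  have PQg: "gf c (x * r w) (y * sv w) \<le> (x * r w) * (2 * (P w)^2 - 1)
         - (y * sv w) * (2 * (sqrt (mu w) * P w + sqrt (1 - mu w) * Qc w)^2 - 1)" if "w \<in> W1" for w
    using F that by (simp add: P_def Qc_def)
  define h where "h = (\<lambda>w. of_real (P w) *s w + of_real (Qc w) *s e w)"
  have eterm: "of_real (Qc w') * of_real (Qc w) * cinner (e w') (e w) =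
      (if w' = w then of_real ((Qc w)^2) else (0::complex))" if w: "w \<in> W1" and w': "w' \<in> W1" for w w'
  proof (cases "mu w = 0")
    case True thus ?thesis using PQ0[OF w] by simp
  next
    case False
    hence "0 < mu w" using mu0[of w] by simp
    thus ?thesis using ee[OF w w'] by (simp add: power2_eq_square)
  qed
  have orth_h: "ortho_fam W1 h"
    unfolding ortho_fam_def
  proof (intro ballI)
    fix w' w assume w': "w' \<in> W1" and w: "w \<in> W1"
    have ew: "cinner (e w') w = 0" using we[OF w' w] cinner_cnj0 by blast
    have "cinner (h w') (h w) = of_real (P w') * of_real (P w) * cinner w' w
        + of_real (Qc w') * of_real (Qc w) * cinner (e w') (e w)"
      unfolding h_def
      by (simp add: cinner_add_left cinner_add_right cinner_scale_left cinner_scale_right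
          we[OF w w'] ew algebra_simps)
    also have "\<dots> = (if w' = w then 1 else 0)"
      using eterm[OF w w'] W1on[OF w' w] PQ1[OF w]
      by (auto simp: power2_eq_square simp flip: of_real_mult of_real_add)
    finally show "cinner (h w') (h w) = (if w' = w then 1 else 0)" .
  qed
  have q1: "Re (cinner (h w) (\<rho>1 *v h w)) = (P w)^2 * r w" if w: "w \<in> W1" for w
  proof -
    have "\<rho>1 *v h w = of_real (P w) *s (\<rho>1 *v w)"
      unfolding h_def by (simp add: matrix_vector_right_distrib mv_scale r1e[OF w])
    moreover have "cinner (e w) (\<rho>1 *v w) = 0"
      using herm_cinner[OF h1, of "e w" w] r1e[OF w] by simp
    ultimately have "cinner (h w) (\<rho>1 *v h w) = of_real (P w) * of_real (P w) * cinner w (\<rho>1 *v w)"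
      unfolding h_def by (simp add: cinner_add_left cinner_scale_left cinner_scale_right)
    thus ?thesis by (simp add: r_def power2_eq_square)
  qed
  have q2: "Re (cinner (h w) (\<rho>2 *v h w)) = (sqrt (mu w) * P w + sqrt (1 - mu w) * Qc w)^2 * sv w"
    if w: "w \<in> W1" for w
  proof (cases "mu w = 0")
    case True
    have "cinner (Q *v w) (Q *v w) = 0" using QwQw True by simp
    hence Qw0: "Q *v w = 0" by (simp add: cinner_self_eq_0)
    have "Q *v h w = 0"
      unfolding h_def e_def using PQ0[OF w True] Qw0
      by (simp add: matrix_vector_right_distrib mv_scale)
    hence "Re (cinner (h w) (\<rho>2 *v h w)) = 0" using quad2[of "h w"] by simp
    thus ?thesis using True PQ0[OF w True] by simp
  next
    case False
    hence pos: "0 < mu w" using mu0[of w] by simp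
    have lt: "mu w < 1" using mu1[OF w] .
    have Qe: "Q *v e w = of_real (k w * (1 - mu w)) *s (Q *v w)"
      unfolding e_def
      by (simp add: mv_real_scale matrix_vector_mult_diff_distrib mv_scale QQ
          cscale_real[symmetric] vector_smult_assoc vec_eq_iff algebra_simps)
    define t where "t = P w + Qc w * k w * (1 - mu w)"
    have Qh': "Q *v h w = of_real t *s (Q *v w)"
      unfolding h_def t_def
      by (simp add: matrix_vector_right_distrib mv_scale Qe vector_smult_assoc vec_eq_iff algebra_simps)
    have "Re (cinner (h w) (\<rho>2 *v h w)) = t^2 * Re (cinner (Q *v w) (\<rho>2 *v (Q *v w)))"
      using quad2[of "h w"] Qh'
      by (simp add: mv_scale cinner_scale_left cinner_scale_right power2_eq_square)
    also have "\<dots> = (t^2 * mu w) * sv w" using pos by (simp add: sv_def)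
    also have "t^2 * mu w = (sqrt (mu w) * P w + sqrt (1 - mu w) * Qc w)^2"
    proof -
      have sm: "sqrt (mu w) * k w * (1 - mu w) = sqrt (1 - mu w)"
      proof -
        have "sqrt (mu w) * k w * (1 - mu w) = (1 - mu w) / sqrt (1 - mu w)"
          using pos lt by (simp add: k_def real_sqrt_mult)
        also have "\<dots> = sqrt (1 - mu w)" using lt by (simp add: real_div_sqrt)
        finally show ?thesis .
      qed
      have "t^2 * mu w = (sqrt (mu w) * t)^2" using pos by (simp add: power_mult_distrib)
      also have "sqrt (mu w) * t = sqrt (mu w) * P w + sqrt (mu w) * k w * (1 - mu w) * Qc w"
        by (simp add: t_def algebra_simps)
      finally show ?thesis using sm by simp
    qed
    finally show ?thesis .
  qed
  have sum_r: "(\<Sum>w\<in>W1. r w) = 1"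
    using trace_supp_onb[OF h1 W1] d1 by (simp add: density_op_def r_def flip: Re_sum)
  have sum_sv: "(\<Sum>w\<in>W1. sv w) \<le> 1"
  proof -
    define I' where "I' = {w \<in> W1. mu w \<noteq> 0}"
    define f' where "f' = (\<lambda>w. (1 / sqrt (mu w)) *\<^sub>R (Q *v w))"
    have finI': "finite I'" using finW1 by (simp add: I'_def)
    have "ortho_fam I' f'"
      unfolding ortho_fam_def
    proof (intro ballI)
      fix w' w assume w': "w' \<in> I'" and w: "w \<in> I'"
      have "cinner (f' w') (f' w) = of_real (1 / sqrt (mu w') * (1 / sqrt (mu w))) * cinner w' (Q *v w)"
        by (simp add: f'_def cinner_real_scale_left cinner_real_scale_right Qinner)
      also have "\<dots> = (if w' = w then 1 else 0)"
        using wQw'[of w w'] w w' mu0[of w] by (auto simp: I'_def real_sqrt_mult_self simp flip: of_real_mult)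
      finally show "cinner (f' w') (f' w) = (if w' = w then 1 else 0)" .
    qed
    from psd_fam_le[OF ps2 finI' this]
    have "(\<Sum>w\<in>I'. Re (cinner (f' w) (\<rho>2 *v f' w))) \<le> 1" using d2 by (simp add: density_op_def)
    moreover have "(\<Sum>w\<in>I'. Re (cinner (f' w) (\<rho>2 *v f' w))) = (\<Sum>w\<in>I'. sv w)"
    proof (rule sum.cong[OF refl])
      fix w assume "w \<in> I'"
      hence pos: "0 < mu w" using mu0[of w] by (simp add: I'_def)
      show "Re (cinner (f' w) (\<rho>2 *v f' w)) = sv w"
        using pos by (simp add: f'_def sv_def mv_real_scale cinner_real_scale_left cinner_real_scale_right)
    qed
    moreover have "(\<Sum>w\<in>I'. sv w) = (\<Sum>w\<in>W1. sv w)"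
      by (rule sum.mono_neutral_left) (auto simp: finW1 I'_def sv_def)
    ultimately show ?thesis by simp
  qed
  define beta where "beta = (\<lambda>w. (sqrt (mu w) * P w + sqrt (1 - mu w) * Qc w)^2)"
  have "gf c x y = gf c ((\<Sum>w\<in>W1. x * r w) + 0) ((\<Sum>w\<in>W1. y * sv w) + y * (1 - (\<Sum>w\<in>W1. sv w)))"
    using sum_r by (simp add: sum_distrib_left[symmetric] algebra_simps)
  also have "\<dots> \<le> gf c (\<Sum>w\<in>W1. x * r w) (\<Sum>w\<in>W1. y * sv w) + gf c 0 (y * (1 - (\<Sum>w\<in>W1. sv w)))"
    using c0 c1 by (intro gf_add) auto
  also have "\<dots> \<le> (\<Sum>w\<in>W1. gf c (x * r w) (y * sv w)) + y * (1 - (\<Sum>w\<in>W1. sv w))"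
    using gf_sum[OF c0 less_imp_le[OF c1], where S=W1 and x="\<lambda>w. x * r w" and y="\<lambda>w. y * sv w"] gf_zero_left[of "y * (1 - (\<Sum>w\<in>W1. sv w))" c]
      y0 sum_sv by simp
  also have "\<dots> \<le> (\<Sum>w\<in>W1. (x * r w) * (2 * (P w)^2 - 1) - (y * sv w) * (2 * beta w - 1)) + y * (1 - (\<Sum>w\<in>W1. sv w))"
    using PQg by (simp add: beta_def sum_mono)
  also have "\<dots> = x * (2 * (\<Sum>w\<in>W1. (P w)^2 * r w) - 1) - y * (2 * (\<Sum>w\<in>W1. beta w * sv w) - 1)"
  proof -
    have "(\<Sum>w\<in>W1. (x * r w) * (2 * (P w)^2 - 1) - (y * sv w) * (2 * beta w - 1))
       = (\<Sum>w\<in>W1. (2 * x) * ((P w)^2 * r w) - x * r w - (2 * y) * (beta w * sv w) + y * sv w)"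
      by (rule sum.cong[OF refl]) (simp add: algebra_simps)
    also have "\<dots> = (2 * x) * (\<Sum>w\<in>W1. (P w)^2 * r w) - x * (\<Sum>w\<in>W1. r w)
        - (2 * y) * (\<Sum>w\<in>W1. beta w * sv w) + y * (\<Sum>w\<in>W1. sv w)"
      by (simp add: sum.distrib sum_subtractf sum_distrib_left)
    finally show ?thesis using sum_r by (simp add: algebra_simps)
  qed
  also have "\<dots> = x * (2 * (\<Sum>w\<in>W1. Re (cinner (h w) (\<rho>1 *v h w))) - 1) - y * (2 * (\<Sum>w\<in>W1. Re (cinner (h w) (\<rho>2 *v h w))) - 1)"
    using q1 q2 by (simp add: beta_def)
  finally show ?thesis using finW1 orth_h by blast
qed


definition tv :: "complex^'a \<Rightarrow> complex^'b \<Rightarrow> complex^('a \<times> 'b)" where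
  "tv a b = (\<chi> p. a $ fst p * b $ snd p)"

lemma sum_UNIV_prod: "(\<Sum>p\<in>(UNIV::('a::finite \<times> 'b::finite) set). f p) = (\<Sum>i\<in>UNIV. \<Sum>j\<in>UNIV. f (i, j))"
proof -
  have "(\<Sum>i\<in>UNIV. \<Sum>j\<in>UNIV. f (i, j)) = (\<Sum>p\<in>(UNIV::'a set) \<times> (UNIV::'b set). f p)"
    by (simp add: sum.cartesian_product)
  thus ?thesis by simp
qed

lemma kron_tv: "kron A B *v tv a b = tv (A *v a) (B *v b)"
  unfolding kron_def tv_def matrix_vector_mult_def
  by (simp add: vec_eq_iff sum_UNIV_prod sum_product mult_ac)

lemma cinner_tv: "cinner (tv a b) (tv c d) = cinner a c * cinner b d"
  unfolding tv_def cinner_def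
  by (simp add: sum_UNIV_prod sum_product mult_ac)

lemma trace_kron: "trace (kron A B) = trace A * trace B"
  unfolding trace_def kron_def by (simp add: sum_UNIV_prod sum_product)

lemma herm_kron: "hermitian A \<Longrightarrow> hermitian B \<Longrightarrow> hermitian (kron A B)"
  unfolding hermitian_def adjoint_mat_def kron_def
  by (simp add: vec_eq_iff)


lemma helstrom_gen:
  fixes \<rho>1 \<rho>2 :: "complex^'a^'a"
  assumes d1: "density_op \<rho>1" and d2: "density_op \<rho>2" and c0: "0 \<le> c" and c1: "c \<le> 1"
    and ov: "\<And>u v. u \<in> supp_op \<rho>1 \<Longrightarrow> v \<in> supp_op \<rho>2 \<Longrightarrow> norm u = 1 \<Longrightarrow> norm v = 1 \<Longrightarrow> cmod (cinner u v) \<le> c"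
    and x0: "0 \<le> x" and y0: "0 \<le> y"
  shows "\<exists>I (f::complex^'a \<Rightarrow> complex^'a). finite I \<and> ortho_fam I f \<and>
     gf c x y \<le> x * (2 * (\<Sum>i\<in>I. Re (cinner (f i) (\<rho>1 *v f i))) - 1) - y * (2 * (\<Sum>i\<in>I. Re (cinner (f i) (\<rho>2 *v f i))) - 1)"
proof (cases "c < 1")
  case True thus ?thesis using helstrom_jordan[OF d1 d2 c0 True ov x0 y0] by blast
next
  case False
  hence "c = 1" using c1 by simp
  thus ?thesis using helstrom_trivial[OF d1 d2, of x y] by (simp add: gf_one)
qed

lemma sum_prod_fst_snd: "(\<Sum>z\<in>A \<times> B. f (fst z) (snd z)) = (\<Sum>i\<in>A. \<Sum>j\<in>B. f i j)"
  by (simp add: sum.cartesian_product case_prod_beta)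

lemma Re_mult_real: "Im a = 0 \<Longrightarrow> Im b = 0 \<Longrightarrow> Re (a * b) = Re a * Re b"
  by simp

lemma herm_Im: "hermitian A \<Longrightarrow> Im (cinner x (A *v x)) = 0"
  by (metis Im_complex_of_real herm_real)

theorem main_result:
  fixes \<rho>1 \<rho>2 :: "complex ^ ('a::finite) ^ 'a"
    and \<sigma>1 \<sigma>2 :: "complex ^ ('b::finite) ^ 'b"
  assumes d1: "density_op \<rho>1" and d2: "density_op \<rho>2" and e1: "density_op \<sigma>1" and e2: "density_op \<sigma>2"
  shows "(trace_dist (kron \<rho>1 \<sigma>1) (kron \<rho>2 \<sigma>2))\<^sup>2
           \<ge> 1 - (1 - (wc_dist \<rho>1 \<rho>2)\<^sup>2) * (1 - (trace_dist \<sigma>1 \<sigma>2)\<^sup>2)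
         \<and> trace_dist \<rho>1 \<rho>2 \<ge> wc_dist \<rho>1 \<rho>2"
proof -
  define w where "w = wc_dist \<rho>1 \<rho>2"
  have w0: "0 \<le> w" and w1: "w \<le> 1" using wc_facts[OF d1 d2] by (simp_all add: w_def)
  define c where "c = sqrt (1 - w^2)"
  have wsq: "w^2 \<le> 1" using w0 w1 by (simp add: power_le_one)
  have c0: "0 \<le> c" and c1: "c \<le> 1" using wsq w0 by (simp_all add: c_def)
  have c2: "c^2 = 1 - w^2" using wsq by (simp add: c_def)
  have ov: "cmod (cinner u v) \<le> c"
    if "u \<in> supp_op \<rho>1" "v \<in> supp_op \<rho>2" "norm u = 1" "norm v = 1" for u v
  proof -
    have "(cmod (cinner u v))^2 \<le> c^2" using wc_facts(3)[OF d1 d2 that] c2 by (simp add: w_def)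
    thus ?thesis using c0 by (rule power2_le_imp_le)
  qed
  have h1: "hermitian \<rho>1" and h2: "hermitian \<rho>2" and h3: "hermitian \<sigma>1" and h4: "hermitian \<sigma>2"
    using d1 d2 e1 e2 by (simp_all add: density_herm)
  have ps: "psd \<rho>1" "psd \<rho>2" "psd \<sigma>1" "psd \<sigma>2" using d1 d2 e1 e2 by (simp_all add: density_psd)
  have tr: "trace \<rho>1 = 1" "trace \<rho>2 = 1" "trace \<sigma>1 = 1" "trace \<sigma>2 = 1"
    using d1 d2 e1 e2 unfolding density_op_def by blast+
  have part2: "w \<le> trace_dist \<rho>1 \<rho>2"
  proof -
    obtain I and f :: "complex^'a \<Rightarrow> complex^'a" where Ifs: "finite I \<and> ortho_fam I f \<and>
      gf c 1 1 \<le> 1 * (2 * (\<Sum>i\<in>I. Re (cinner (f i) (\<rho>1 *v f i))) - 1) - 1 * (2 * (\<Sum>i\<in>I. Re (cinner (f i) (\<rho>2 *v f i))) - 1)"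
    proof -
      have "\<exists>I (f::complex^'a \<Rightarrow> complex^'a). finite I \<and> ortho_fam I f \<and>
        gf c 1 1 \<le> 1 * (2 * (\<Sum>i\<in>I. Re (cinner (f i) (\<rho>1 *v f i))) - 1) - 1 * (2 * (\<Sum>i\<in>I. Re (cinner (f i) (\<rho>2 *v f i))) - 1)"
        by (rule helstrom_gen[OF d1 d2 c0 c1 _ zero_le_one zero_le_one]) (rule ov)
      thus ?thesis by (elim exE) (erule that)
    qed
    have I: "finite I" "ortho_fam I f" using Ifs by simp_all
    have g: "gf c 1 1 \<le> 1 * (2 * (\<Sum>i\<in>I. Re (cinner (f i) (\<rho>1 *v f i))) - 1) - 1 * (2 * (\<Sum>i\<in>I. Re (cinner (f i) (\<rho>2 *v f i))) - 1)"
      using Ifs by (elim conjE)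
    have hX: "hermitian (\<rho>1 - \<rho>2)" by (rule herm_diff[OF h1 h2])
    have "2 * (\<Sum>i\<in>I. Re (cinner (f i) ((\<rho>1 - \<rho>2) *v f i))) - Re (trace (\<rho>1 - \<rho>2)) \<le> Re (trace (mat_abs (\<rho>1 - \<rho>2)))"
      by (rule abs_lower[OF hX I])
    moreover have "Re (trace (\<rho>1 - \<rho>2)) = 0" using tr by (simp add: trace_sub)
    moreover have "(\<Sum>i\<in>I. Re (cinner (f i) ((\<rho>1 - \<rho>2) *v f i))) =
        (\<Sum>i\<in>I. Re (cinner (f i) (\<rho>1 *v f i))) - (\<Sum>i\<in>I. Re (cinner (f i) (\<rho>2 *v f i)))"
      by (simp add: matrix_vector_mult_diff_rdistrib cinner_diff_right sum_subtractf)
    moreover have "gf c 1 1 = 2 * w"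
    proof -
      have "gf c 1 1 = sqrt (4 * w^2)" using c2 by (simp add: gf_def)
      also have "\<dots> = 2 * w" using w0 by (simp add: real_sqrt_mult)
      finally show ?thesis .
    qed
    ultimately show ?thesis using g by (simp add: trace_dist_def)
  qed
  define Y where "Y = \<sigma>1 - \<sigma>2"
  have hY: "hermitian Y" unfolding Y_def by (rule herm_diff[OF h3 h4])
  obtain U where U: "onb_of U UNIV" "\<forall>u\<in>U. Y *v u = cinner u (Y *v u) *s u"
    using spectral_full[OF hY] by blast
  have finU: "finite U" using U by (simp add: onb_of_def)
  define l where "l = (\<lambda>u. Re (cinner u (Y *v u)))"
  define t where "t = trace_dist \<sigma>1 \<sigma>2"
  have t_eq: "2 * t = (\<Sum>u\<in>U. \<bar>l u\<bar>)"
    using trace_mat_abs[OF hY U] by (simp add: t_def trace_dist_def Y_def[symmetric] l_def)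
  have sum_l: "(\<Sum>u\<in>U. l u) = 0"
    using trace_herm_onb[OF hY U(1)] tr by (simp add: l_def Y_def trace_sub)
  define Up where "Up = {u \<in> U. 0 < l u}"
  define Um where "Um = {u \<in> U. \<not> 0 < l u}"
  have finUp: "finite Up" and finUm: "finite Um" using finU by (simp_all add: Up_def Um_def)
  have UpUm: "Up \<inter> Um = {}" "Up \<union> Um = U" by (auto simp: Up_def Um_def)
  have split: "(\<Sum>u\<in>U. g u) = (\<Sum>u\<in>Up. g u) + (\<Sum>u\<in>Um. g u)" for g :: "_ \<Rightarrow> real"
    using sum.union_disjoint[OF finUp finUm UpUm(1), of g] UpUm(2) by simp
  have sumUp: "(\<Sum>u\<in>Up. l u) = t"
  proof -
    have "(\<Sum>u\<in>U. \<bar>l u\<bar>) = (\<Sum>u\<in>Up. l u) - (\<Sum>u\<in>Um. l u)"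
      using split[of "\<lambda>u. \<bar>l u\<bar>"] by (simp add: Up_def Um_def sum_negf[symmetric])
    moreover have "(\<Sum>u\<in>Up. l u) + (\<Sum>u\<in>Um. l u) = 0" using split[of l] sum_l by simp
    ultimately show ?thesis using t_eq by simp
  qed
  define p1 where "p1 = (\<Sum>u\<in>Up. Re (cinner u (\<sigma>1 *v u)))"
  define q1 where "q1 = (\<Sum>u\<in>Up. Re (cinner u (\<sigma>2 *v u)))"
  define p2 where "p2 = (\<Sum>u\<in>Um. Re (cinner u (\<sigma>1 *v u)))"
  define q2 where "q2 = (\<Sum>u\<in>Um. Re (cinner u (\<sigma>2 *v u)))"
  have pq0: "0 \<le> p1" "0 \<le> q1" "0 \<le> p2" "0 \<le> q2"
    unfolding p1_def q1_def p2_def q2_def using ps by (simp_all add: sum_nonneg psd_nonneg)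
  have pp: "p1 + p2 = 1"
    using split[of "\<lambda>u. Re (cinner u (\<sigma>1 *v u))"] trace_herm_onb[OF h3 U(1)] tr
    by (simp add: p1_def p2_def)
  have qq: "q1 + q2 = 1"
    using split[of "\<lambda>u. Re (cinner u (\<sigma>2 *v u))"] trace_herm_onb[OF h4 U(1)] tr
    by (simp add: q1_def q2_def)
  have pqt: "p1 - q1 = t"
    using sumUp by (simp add: p1_def q1_def l_def Y_def matrix_vector_mult_diff_rdistrib
        cinner_diff_right sum_subtractf)
  obtain I1 and f1 :: "complex^'a \<Rightarrow> complex^'a" where If1: "finite I1 \<and> ortho_fam I1 f1 \<and>
    gf c p1 q1 \<le> p1 * (2 * (\<Sum>i\<in>I1. Re (cinner (f1 i) (\<rho>1 *v f1 i))) - 1) - q1 * (2 * (\<Sum>i\<in>I1. Re (cinner (f1 i) (\<rho>2 *v f1 i))) - 1)"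
  proof -
    have "\<exists>I (f::complex^'a \<Rightarrow> complex^'a). finite I \<and> ortho_fam I f \<and>
      gf c p1 q1 \<le> p1 * (2 * (\<Sum>i\<in>I. Re (cinner (f i) (\<rho>1 *v f i))) - 1) - q1 * (2 * (\<Sum>i\<in>I. Re (cinner (f i) (\<rho>2 *v f i))) - 1)"
      by (rule helstrom_gen[OF d1 d2 c0 c1 _ pq0(1,2)]) (rule ov)
    thus ?thesis by (elim exE) (erule that)
  qed
  have I1: "finite I1" "ortho_fam I1 f1" using If1 by simp_all
  have g1: "gf c p1 q1 \<le> p1 * (2 * (\<Sum>i\<in>I1. Re (cinner (f1 i) (\<rho>1 *v f1 i))) - 1) - q1 * (2 * (\<Sum>i\<in>I1. Re (cinner (f1 i) (\<rho>2 *v f1 i))) - 1)"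
    using If1 by (elim conjE)
  obtain I2 and f2 :: "complex^'a \<Rightarrow> complex^'a" where If2: "finite I2 \<and> ortho_fam I2 f2 \<and>
    gf c p2 q2 \<le> p2 * (2 * (\<Sum>i\<in>I2. Re (cinner (f2 i) (\<rho>1 *v f2 i))) - 1) - q2 * (2 * (\<Sum>i\<in>I2. Re (cinner (f2 i) (\<rho>2 *v f2 i))) - 1)"
  proof -
    have "\<exists>I (f::complex^'a \<Rightarrow> complex^'a). finite I \<and> ortho_fam I f \<and>
      gf c p2 q2 \<le> p2 * (2 * (\<Sum>i\<in>I. Re (cinner (f i) (\<rho>1 *v f i))) - 1) - q2 * (2 * (\<Sum>i\<in>I. Re (cinner (f i) (\<rho>2 *v f i))) - 1)"
      by (rule helstrom_gen[OF d1 d2 c0 c1 _ pq0(3,4)]) (rule ov)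
    thus ?thesis by (elim exE) (erule that)
  qed
  have I2: "finite I2" "ortho_fam I2 f2" using If2 by simp_all
  have g2: "gf c p2 q2 \<le> p2 * (2 * (\<Sum>i\<in>I2. Re (cinner (f2 i) (\<rho>1 *v f2 i))) - 1) - q2 * (2 * (\<Sum>i\<in>I2. Re (cinner (f2 i) (\<rho>2 *v f2 i))) - 1)"
    using If2 by (elim conjE)
  define A1 where "A1 = (\<Sum>i\<in>I1. Re (cinner (f1 i) (\<rho>1 *v f1 i)))"
  define B1 where "B1 = (\<Sum>i\<in>I1. Re (cinner (f1 i) (\<rho>2 *v f1 i)))"
  define A2 where "A2 = (\<Sum>i\<in>I2. Re (cinner (f2 i) (\<rho>1 *v f2 i)))"
  define B2 where "B2 = (\<Sum>i\<in>I2. Re (cinner (f2 i) (\<rho>2 *v f2 i)))"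
  define X where "X = kron \<rho>1 \<sigma>1 - kron \<rho>2 \<sigma>2"
  have hX: "hermitian X" unfolding X_def by (intro herm_diff herm_kron h1 h2 h3 h4)
  have trX: "Re (trace X) = 0" using tr by (simp add: X_def trace_sub trace_kron)
  define J where "J = (I1 \<times> Up) <+> (I2 \<times> Um)"
  define F where "F = case_sum (\<lambda>(i, u::complex^'b). tv (f1 i) u) (\<lambda>(i, u::complex^'b). tv (f2 i) u)"
  have finJ: "finite J" using I1 I2 finUp finUm by (simp add: J_def)
  have Uon: "u \<in> U \<Longrightarrow> u' \<in> U \<Longrightarrow> cinner u u' = (if u = u' then 1 else 0)" for u u'
    using onb_orth[OF U(1)] by blast
  have orthF: "ortho_fam J F"
    unfolding ortho_fam_def
  proof (intro ballI)
    fix j j' assume j: "j \<in> J" and j': "j' \<in> J"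
    show "cinner (F j) (F j') = (if j = j' then 1 else 0)"
      using j j' I1(2) I2(2) Uon UpUm
      by (auto simp: J_def F_def cinner_tv ortho_fam_def Up_def Um_def)
  qed
  have quadF: "Re (cinner (tv h u) (X *v tv h u)) =
      Re (cinner h (\<rho>1 *v h)) * Re (cinner u (\<sigma>1 *v u)) - Re (cinner h (\<rho>2 *v h)) * Re (cinner u (\<sigma>2 *v u))"
    for h u
    by (simp add: X_def matrix_vector_mult_diff_rdistrib kron_tv cinner_diff_right cinner_tv
        Re_mult_real herm_Im h1 h2 h3 h4)
  have sumF: "(\<Sum>j\<in>J. Re (cinner (F j) (X *v F j))) = (A1 * p1 - B1 * q1) + (A2 * p2 - B2 * q2)"
  proof -
    have "(\<Sum>j\<in>J. Re (cinner (F j) (X *v F j))) =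
        (\<Sum>z\<in>I1 \<times> Up. Re (cinner (tv (f1 (fst z)) (snd z)) (X *v tv (f1 (fst z)) (snd z))))
      + (\<Sum>z\<in>I2 \<times> Um. Re (cinner (tv (f2 (fst z)) (snd z)) (X *v tv (f2 (fst z)) (snd z))))"
      unfolding J_def using I1 I2 finUp finUm
      by (simp add: sum.Plus F_def o_def case_prod_beta)
    also have "\<dots> = (A1 * p1 - B1 * q1) + (A2 * p2 - B2 * q2)"
      by (simp add: quadF sum_subtractf sum_prod_fst_snd[where f="\<lambda>i j. Re (cinner (f1 i) (\<rho>1 *v f1 i)) * Re (cinner j (\<sigma>1 *v j))"]
          sum_prod_fst_snd[where f="\<lambda>i j. Re (cinner (f1 i) (\<rho>2 *v f1 i)) * Re (cinner j (\<sigma>2 *v j))"]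
          sum_prod_fst_snd[where f="\<lambda>i j. Re (cinner (f2 i) (\<rho>1 *v f2 i)) * Re (cinner j (\<sigma>1 *v j))"]
          sum_prod_fst_snd[where f="\<lambda>i j. Re (cinner (f2 i) (\<rho>2 *v f2 i)) * Re (cinner j (\<sigma>2 *v j))"] sum_product
          A1_def B1_def A2_def B2_def p1_def q1_def p2_def q2_def)
    finally show ?thesis .
  qed
  have low: "2 * sqrt (1 - c^2 + c^2 * t^2) \<le> Re (trace (mat_abs X))"
  proof -
    have "2 * sqrt (1 - c^2 + c^2 * t^2) \<le> gf c p1 q1 + gf c p2 q2"
      by (rule gf_final[OF c0 c1 pp qq pqt])
    also have "\<dots> \<le> p1 * (2 * A1 - 1) - q1 * (2 * B1 - 1) + (p2 * (2 * A2 - 1) - q2 * (2 * B2 - 1))"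
      using g1 g2 by (simp add: A1_def B1_def A2_def B2_def)
    also have "\<dots> = 2 * (\<Sum>j\<in>J. Re (cinner (F j) (X *v F j))) - Re (trace X)"
      using sumF trX pp qq by (simp add: algebra_simps)
    also have "\<dots> \<le> Re (trace (mat_abs X))" by (rule abs_lower[OF hX finJ orthF])
    finally show ?thesis .
  qed
  have arg0: "0 \<le> 1 - c^2 + c^2 * t^2" using wsq by (simp add: c2 add_nonneg_nonneg mult_nonneg_nonneg)
  have "sqrt (1 - c^2 + c^2 * t^2) \<le> trace_dist (kron \<rho>1 \<sigma>1) (kron \<rho>2 \<sigma>2)"
    using low by (simp add: trace_dist_def X_def)
  hence "(sqrt (1 - c^2 + c^2 * t^2))^2 \<le> (trace_dist (kron \<rho>1 \<sigma>1) (kron \<rho>2 \<sigma>2))^2"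
    by (rule power_mono) (simp add: arg0)
  hence "1 - c^2 + c^2 * t^2 \<le> (trace_dist (kron \<rho>1 \<sigma>1) (kron \<rho>2 \<sigma>2))^2" using arg0 by simp
  hence part1: "1 - (1 - w^2) * (1 - t^2) \<le> (trace_dist (kron \<rho>1 \<sigma>1) (kron \<rho>2 \<sigma>2))^2"
    using c2 by (simp add: algebra_simps)
  show ?thesis using part1 part2 by (simp add: w_def t_def)
qed


theorem mainTheorem7:
  fixes \<rho>1 \<rho>2 :: "complex ^ ('a::finite) ^ 'a"
    and \<sigma>1 \<sigma>2 :: "complex ^ ('b::finite) ^ 'b"
  assumes "density_op \<rho>1" "density_op \<rho>2" "density_op \<sigma>1" "density_op \<sigma>2"
  shows "(trace_dist (kron \<rho>1 \<sigma>1) (kron \<rho>2 \<sigma>2))\<^sup>2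
           \<ge> 1 - (1 - (wc_dist \<rho>1 \<rho>2)\<^sup>2) * (1 - (trace_dist \<sigma>1 \<sigma>2)\<^sup>2)
         \<and> trace_dist \<rho>1 \<rho>2 \<ge> wc_dist \<rho>1 \<rho>2"
  by (rule main_result[OF assms])

end
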